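(* In the setting of the context, fix $\varrho>0$. For $\kappa>0$ big enough there exists a constant $C>0$ independent of $\kappa$ such that, for any $Z\in B(\varrho)$, $$\|\mathcal R_1[Z]\|_{11/3}\le C,\qquad\|\mathcal R_j[Z]\|_{4/3}\le C,\ j=2,3,$$ and $$\|\partial_W\mathcal R_1[Z]\|_3\le C,\quad\|\partial_X\mathcal R_1[Z]\|_{7/3}\le C,\quad\|\partial_Y\mathcal R_1[Z]\|_{7/3}\le C,$$ $$\|\partial_W\mathcal R_j[Z]\|_{2/3}\le C,\quad\|\partial_X\mathcal R_j[Z]\|_2\le C,\quad\|\partial_Y\mathcal R_j[Z]\|_2\le C,\quad j=2,3.$$
   Context: Inner equation: $\mathcal K=-\tfrac34U^{2/3}W^2-\frac1{3U^{2/3}}\big((1+\mathcal J)^{-1/2}-1\big)$ with $\mathcal J=\frac{4W^2}{9U^{2/3}}-\frac{16W}{27U^{4/3}}+\frac{16}{81U^2}+\frac{4(X+Y)}{9U}\big(W-\frac2{3U^{2/3}}\big)-\frac{4i(X-Y)}{3U^{2/3}}-\frac{X^2+Y^2}{3U^{4/3}}+\frac{10XY}{9U^{4/3}}$; $Z=(W,X,Y)$, $\mathcal A=\mathrm{diag}(0,i,-i)$, $f=(-\partial_U\mathcal K,i\partial_Y\mathcal K,-i\partial_X\mathcal K)^T$, $g=\partial_W\mathcal K$. For $U$ and $\zeta=(W,X,Y)$ let $\mathcal R(U,\zeta)=\frac{f(U,\zeta)-g(U,\zeta)\mathcal A\zeta}{1+g(U,\zeta)}$; for a function $\varphi$ of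 $U$, $\mathcal R[\varphi](U)=\mathcal R(U,\varphi(U))$ and $\partial_W\mathcal R_j[\varphi](U)=(\partial_W\mathcal R_j)(U,\varphi(U))$, and similarly for $X,Y$. Fix $\beta_0\in(0,\tfrac\pi2)$; $D^u_\kappa=\{U\in\mathbb C:|\operatorname{Im}U|\ge\tan\beta_0\operatorname{Re}U+\kappa\}$, with fractional powers of $U$ given by a continuous determination of $\arg U$ on $D^u_\kappa$ with $\arg U\in(-\pi,0)$ for $\operatorname{Im}U<0$. $\|\varphi\|_\nu=\sup_{U\in D^u_\kappa}|U^\nu\varphi(U)|$, $\mathcal X_\nu$ the space of analytic $\varphi$ on $D^u_\kappa$ with $\|\varphi\|_\nu<\infty$, $\|\varphi\|_\times=\|\varphi_1\|_{8/3}+\|\varphi_2\|_{4/3}+\|\varphi_3\|_{4/3}$, and $B(\varrho)=\{\varphi\in\mathcal X_{8/3}\times\mathcal X_{4/3}\times\mathcal X_{4/3}:\|\varphi\|_\times\le\varrho\}$. *)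

theory Defs
  imports "HOL-Analysis.Analysis"
begin

definition Dk :: "real \<Rightarrow> real \<Rightarrow> complex set" where
  "Dk beta0 kappa = {U. \<bar>Im U\<bar> \<ge> tan beta0 * Re U + kappa}"

text \<open>Logarithm with the continuous determination of arg U used on D^u_kappa:
  arg U in (-pi,0) for Im U < 0, arg U = -pi on the negative real axis,
  arg U in (-2pi,-pi) for Im U > 0.\<close>
definition LnD :: "complex \<Rightarrow> complex" where
  "LnD U = (if Im (Ln U) > 0 then Ln U - 2 * of_real pi * \<i> else Ln U)"

definition powD :: "complex \<Rightarrow> real \<Rightarrow> complex" where
  "powD U a = exp (of_real a * LnD U)"

definition Jf :: "complex \<Rightarrow> complex \<Rightarrow> complex \<Rightarrow> complex \<Rightarrow> complex" where
  "Jf U W X Y =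
     4 * W^2 / (9 * powD U (2/3)) - 16 * W / (27 * powD U (4/3)) + 16 / (81 * U^2)
     + 4 * (X + Y) / (9 * U) * (W - 2 / (3 * powD U (2/3)))
     - 4 * \<i> * (X - Y) / (3 * powD U (2/3))
     - (X^2 + Y^2) / (3 * powD U (4/3)) + 10 * X * Y / (9 * powD U (4/3))"

text \<open>(1+J)^(-1/2) uses the principal branch.\<close>
definition Kf :: "complex \<Rightarrow> complex \<Rightarrow> complex \<Rightarrow> complex \<Rightarrow> complex" where
  "Kf U W X Y = - (3/4) * powD U (2/3) * W^2
     - 1 / (3 * powD U (2/3)) * ((1 + Jf U W X Y) powr (-1/2) - 1)"

definition gK :: "complex \<Rightarrow> complex \<Rightarrow> complex \<Rightarrow> complex \<Rightarrow> complex" where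
  "gK U W X Y = deriv (\<lambda>w. Kf U w X Y) W"

definition f1 :: "complex \<Rightarrow> complex \<Rightarrow> complex \<Rightarrow> complex \<Rightarrow> complex" where
  "f1 U W X Y = - deriv (\<lambda>u. Kf u W X Y) U"

definition f2 :: "complex \<Rightarrow> complex \<Rightarrow> complex \<Rightarrow> complex \<Rightarrow> complex" where
  "f2 U W X Y = \<i> * deriv (\<lambda>y. Kf U W X y) Y"

definition f3 :: "complex \<Rightarrow> complex \<Rightarrow> complex \<Rightarrow> complex \<Rightarrow> complex" where
  "f3 U W X Y = - \<i> * deriv (\<lambda>x. Kf U W x Y) X"

text \<open>R = (f - g A zeta)/(1+g) with A = diag(0,i,-i), componentwise.\<close>
definition R1 :: "complex \<Rightarrow> complex \<Rightarrow> complex \<Rightarrow> complex \<Rightarrow> complex" where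
  "R1 U W X Y = f1 U W X Y / (1 + gK U W X Y)"

definition R2 :: "complex \<Rightarrow> complex \<Rightarrow> complex \<Rightarrow> complex \<Rightarrow> complex" where
  "R2 U W X Y = (f2 U W X Y - gK U W X Y * (\<i> * X)) / (1 + gK U W X Y)"

definition R3 :: "complex \<Rightarrow> complex \<Rightarrow> complex \<Rightarrow> complex \<Rightarrow> complex" where
  "R3 U W X Y = (f3 U W X Y - gK U W X Y * (- \<i> * Y)) / (1 + gK U W X Y)"

definition dW :: "(complex \<Rightarrow> complex \<Rightarrow> complex \<Rightarrow> complex \<Rightarrow> complex)
    \<Rightarrow> complex \<Rightarrow> complex \<Rightarrow> complex \<Rightarrow> complex \<Rightarrow> complex" where
  "dW F U W X Y = deriv (\<lambda>w. F U w X Y) W"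

definition dX :: "(complex \<Rightarrow> complex \<Rightarrow> complex \<Rightarrow> complex \<Rightarrow> complex)
    \<Rightarrow> complex \<Rightarrow> complex \<Rightarrow> complex \<Rightarrow> complex \<Rightarrow> complex" where
  "dX F U W X Y = deriv (\<lambda>x. F U W x Y) X"

definition dY :: "(complex \<Rightarrow> complex \<Rightarrow> complex \<Rightarrow> complex \<Rightarrow> complex)
    \<Rightarrow> complex \<Rightarrow> complex \<Rightarrow> complex \<Rightarrow> complex \<Rightarrow> complex" where
  "dY F U W X Y = deriv (\<lambda>y. F U W X y) Y"

definition wnorm :: "real \<Rightarrow> real \<Rightarrow> real \<Rightarrow> (complex \<Rightarrow> complex) \<Rightarrow> ereal" where
  "wnorm beta0 kappa nu phi = (SUP U\<in>Dk beta0 kappa. ereal (norm U powr nu * cmod (phi U)))"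

definition Xsp :: "real \<Rightarrow> real \<Rightarrow> real \<Rightarrow> (complex \<Rightarrow> complex) \<Rightarrow> bool" where
  "Xsp beta0 kappa nu phi \<longleftrightarrow> phi analytic_on Dk beta0 kappa \<and> wnorm beta0 kappa nu phi < \<infinity>"

definition inBall :: "real \<Rightarrow> real \<Rightarrow> real \<Rightarrow> (complex \<Rightarrow> complex) \<Rightarrow> (complex \<Rightarrow> complex)
    \<Rightarrow> (complex \<Rightarrow> complex) \<Rightarrow> bool" where
  "inBall beta0 kappa rho W X Y \<longleftrightarrow>
     Xsp beta0 kappa (8/3) W \<and> Xsp beta0 kappa (4/3) X \<and> Xsp beta0 kappa (4/3) Y \<and>
     wnorm beta0 kappa (8/3) W + wnorm beta0 kappa (4/3) X + wnorm beta0 kappa (4/3) Y \<le> ereal rho"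

end

theory Submission
  imports Defs
begin

lemma complex_nonpos_iff: "(z::complex) \<in> \<real>\<^sub>\<le>\<^sub>0 \<longleftrightarrow> Re z \<le> 0 \<and> Im z = 0"
  by (rule complex_nonpos_Reals_iff)

definition good :: "complex \<Rightarrow> bool" where "good U \<longleftrightarrow> (Im U = 0 \<longrightarrow> Re U < 0)"

lemma good_nz: "good U \<Longrightarrow> U \<noteq> 0" by (auto simp: good_def)

lemma good_open: "open {U. good U}"
proof -
  have "{U. good U} = - {U. Im U = 0 \<and> Re U \<ge> 0}" by (auto simp: good_def)
  moreover have "closed {U. Im U = 0 \<and> Re U \<ge> 0}"
    by (intro closed_Collect_conj closed_Collect_eq closed_Collect_le continuous_intros)
  ultimately show ?thesis by (simp add: open_Compl)
qed

lemma powD_add: "powD U a * powD U b = powD U (a + b)"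
  by (simp add: powD_def exp_add[symmetric] distrib_right)

lemma powD_minus: "powD U (-a) = inverse (powD U a)"
  by (simp add: powD_def exp_minus)

lemma powD_nz: "powD U a \<noteq> 0" by (simp add: powD_def)

lemma exp_LnD: "U \<noteq> 0 \<Longrightarrow> exp (LnD U) = U"
  by (simp add: LnD_def exp_diff)

lemma powD_one: "U \<noteq> 0 \<Longrightarrow> powD U 1 = U"
  by (simp add: powD_def exp_LnD)

lemma powD_two: "U \<noteq> 0 \<Longrightarrow> powD U 2 = U^2"
proof -
  assume "U \<noteq> 0"
  have "powD U 2 = powD U 1 * powD U 1" by (simp add: powD_add)
  thus ?thesis using powD_one[OF \<open>U \<noteq> 0\<close>] by (simp add: power2_eq_square)
qed

lemma Re_LnD: "Re (LnD U) = Re (Ln U)" by (simp add: LnD_def)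

lemma norm_powD: "U \<noteq> 0 \<Longrightarrow> cmod (powD U a) = cmod U powr a"
  by (simp add: powD_def Re_LnD powr_def Re_Ln)

lemma LnD_eq: assumes "good U" shows "LnD U = Ln (-U) - \<i> * pi"
proof -
  have nz: "U \<noteq> 0" using assms good_nz by auto
  show ?thesis
  proof (cases "Im U < 0")
    case True
    then have "Im (Ln U) < 0" using nz Im_Ln_pos_le[OF nz] Im_Ln_le_pi[of U]
      by linarith
    with True show ?thesis using nz by (simp add: LnD_def Ln_minus)
  next
    case False
    have "Im (Ln U) > 0"
    proof (cases "Im U = 0")
      case True
      then have "Re U < 0" using assms by (auto simp: good_def)
      then show ?thesis using True nz Im_Ln_eq_pi[OF nz] pi_gt_zero by simp
    next
      case False2: False
      with False have "Im U > 0" by auto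
      then show ?thesis using Im_Ln_pos_lt_imp by blast
    qed
    moreover have "Ln (-U) = Ln U - \<i> * pi" using False nz assms
      by (auto simp: Ln_minus good_def)
    ultimately show ?thesis by (simp add: LnD_def)
  qed
qed

lemma powD_deriv [derivative_intros]:
  assumes "good U"
  shows "((\<lambda>u. powD u a) has_field_derivative (of_real a * powD U (a - 1))) (at U within S)"
proof -
  have nz: "U \<noteq> 0" using assms good_nz by auto
  have nn: "- U \<notin> \<real>\<^sub>\<le>\<^sub>0" using assms by (auto simp: complex_nonpos_Reals_iff good_def)
  have "((\<lambda>u. exp (of_real a * (Ln (-u) - \<i> * pi))) has_field_derivative
          exp (of_real a * (Ln (-U) - \<i> * pi)) * (of_real a * (inverse (-U) * (-1) - 0))) (at U)"
    by (rule derivative_eq_intros refl has_field_derivative_Ln nn | simp)+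
  moreover have "exp (of_real a * (Ln (-U) - \<i> * pi)) * (of_real a * (inverse (-U) * (-1) - 0))
     = of_real a * powD U (a - 1)"
  proof -
    have "powD U (a - 1) = powD U a * powD U (-1)" by (simp add: powD_add)
    also have "\<dots> = powD U a * inverse U" by (simp add: powD_minus powD_one nz)
    finally show ?thesis using LnD_eq[OF assms] by (simp add: powD_def)
  qed
  ultimately have "((\<lambda>u. exp (of_real a * (Ln (-u) - \<i> * pi))) has_field_derivative
          of_real a * powD U (a - 1)) (at U)" by (metis (no_types))
  then have "((\<lambda>u. powD u a) has_field_derivative of_real a * powD U (a - 1)) (at U)"
    by (rule has_field_derivative_transform_within_open[OF _ good_open])
       (use assms LnD_eq in \<open>auto simp: powD_def\<close>)
  then show ?thesis by (rule has_field_derivative_at_within)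
qed

abbreviation (input) P :: "complex \<Rightarrow> real \<Rightarrow> complex" where "P \<equiv> powD"

definition Jp :: "complex \<Rightarrow> complex \<Rightarrow> complex \<Rightarrow> complex \<Rightarrow> complex" where
  "Jp U W X Y = 4/9*W^2*P U (-2/3) - 16/27*W*P U (-4/3) + 16/81*P U (-2)
     + 4/9*(X+Y)*W*P U (-1) - 8/27*(X+Y)*P U (-5/3) - 4*\<i>/3*(X-Y)*P U (-2/3)
     - 1/3*(X^2+Y^2)*P U (-4/3) + 10/9*X*Y*P U (-4/3)"

lemma Jf_eq: assumes "U \<noteq> 0" shows "Jf U W X Y = Jp U W X Y"
proof -
  have a: "P U (-2/3) = inverse (P U (2/3))" "P U (-4/3) = inverse (P U (4/3))"
    "P U (-2) = inverse (U^2)" "P U (-1) = inverse U"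
    using powD_minus[of U "2/3"] powD_minus[of U "4/3"] powD_minus[of U 2] powD_minus[of U 1]
    by (simp_all add: powD_two powD_one assms)
  have b: "P U (-5/3) = inverse U * inverse (P U (2/3))"
    using powD_add[of U "-1" "-2/3"] a by simp
  show ?thesis unfolding Jf_def Jp_def a b
    using assms powD_nz[of U "2/3"] powD_nz[of U "4/3"]
    by (simp add: field_simps) (simp add: algebra_simps power2_eq_square)?
qed

definition "JU U W X Y = -8/27*W^2*P U (-5/3) + 64/81*W*P U (-7/3) - 32/81*P U (-3)
   - 4/9*(X+Y)*W*P U (-2) + 40/81*(X+Y)*P U (-8/3) + 8*\<i>/9*(X-Y)*P U (-5/3)
   + 4/9*(X^2+Y^2)*P U (-7/3) - 40/27*X*Y*P U (-7/3)"
definition "JW U W X Y = 8/9*W*P U (-2/3) - 16/27*P U (-4/3) + 4/9*(X+Y)*P U (-1)"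
definition "JX U W X Y = 4/9*W*P U (-1) - 8/27*P U (-5/3) - 4*\<i>/3*P U (-2/3)
   - 2/3*X*P U (-4/3) + 10/9*Y*P U (-4/3)"
definition "JY U W X Y = 4/9*W*P U (-1) - 8/27*P U (-5/3) + 4*\<i>/3*P U (-2/3)
   - 2/3*Y*P U (-4/3) + 10/9*X*P U (-4/3)"
definition "JUW U W X Y = -16/27*W*P U (-5/3) + 64/81*P U (-7/3) - 4/9*(X+Y)*P U (-2)"
definition "JUX U W X Y = -4/9*W*P U (-2) + 40/81*P U (-8/3) + 8*\<i>/9*P U (-5/3)
   + 8/9*X*P U (-7/3) - 40/27*Y*P U (-7/3)"
definition "JUY U W X Y = -4/9*W*P U (-2) + 40/81*P U (-8/3) - 8*\<i>/9*P U (-5/3)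
   + 8/9*Y*P U (-7/3) - 40/27*X*P U (-7/3)"
definition "JWW U W X Y = 8/9*P U (-2/3)"
definition "JWX U W X Y = 4/9*P U (-1)"
definition "JXX U W X Y = -2/3*P U (-4/3)"
definition "JXY U W X Y = 10/9*P U (-4/3)"

lemma JU_deriv: "good U \<Longrightarrow> ((\<lambda>u. Jp u W X Y) has_field_derivative JU U W X Y) (at U within S)"
  unfolding Jp_def JU_def
  apply (rule derivative_eq_intros refl | assumption)+
  apply (simp add: algebra_simps)
  apply (simp add: field_simps)
  done

lemma JW_deriv [derivative_intros]: "((\<lambda>w. Jp U w X Y) has_field_derivative JW U w X Y) (at w within S)"
  unfolding Jp_def JW_def
  by (rule derivative_eq_intros refl)+ (simp add: algebra_simps)
lemma JX_deriv [derivative_intros]: "((\<lambda>x. Jp U W x Y) has_field_derivative JX U W x Y) (at x within S)"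
  unfolding Jp_def JX_def
  by (rule derivative_eq_intros refl)+ (simp add: algebra_simps)
lemma JY_deriv [derivative_intros]: "((\<lambda>y. Jp U W X y) has_field_derivative JY U W X y) (at y within S)"
  unfolding Jp_def JY_def
  by (rule derivative_eq_intros refl)+ (simp add: algebra_simps)

lemma JUW_deriv [derivative_intros]: "((\<lambda>w. JU U w X Y) has_field_derivative JUW U w X Y) (at w within S)"
  unfolding JU_def JUW_def
  by (rule derivative_eq_intros refl)+ (simp add: algebra_simps)
lemma JUX_deriv [derivative_intros]: "((\<lambda>x. JU U W x Y) has_field_derivative JUX U W x Y) (at x within S)"
  unfolding JU_def JUX_def
  by (rule derivative_eq_intros refl)+ (simp add: algebra_simps)
lemma JUY_deriv [derivative_intros]: "((\<lambda>y. JU U W X y) has_field_derivative JUY U W X y) (at y within S)"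
  unfolding JU_def JUY_def
  by (rule derivative_eq_intros refl)+ (simp add: algebra_simps)

lemma JWW_deriv [derivative_intros]: "((\<lambda>w. JW U w X Y) has_field_derivative JWW U w X Y) (at w within S)"
  unfolding JW_def JWW_def
  by (rule derivative_eq_intros refl)+ (simp add: algebra_simps)
lemma JWX_deriv [derivative_intros]: "((\<lambda>x. JW U W x Y) has_field_derivative JWX U W x Y) (at x within S)"
  unfolding JW_def JWX_def
  by (rule derivative_eq_intros refl)+ (simp add: algebra_simps)
lemma JWY_deriv [derivative_intros]: "((\<lambda>y. JW U W X y) has_field_derivative JWX U W X y) (at y within S)"
  unfolding JW_def JWX_def
  by (rule derivative_eq_intros refl)+ (simp add: algebra_simps)
lemma JXW_deriv [derivative_intros]: "((\<lambda>w. JX U w X Y) has_field_derivative JWX U w X Y) (at w within S)"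
  unfolding JX_def JWX_def
  by (rule derivative_eq_intros refl)+ (simp add: algebra_simps)
lemma JYW_deriv [derivative_intros]: "((\<lambda>w. JY U w X Y) has_field_derivative JWX U w X Y) (at w within S)"
  unfolding JY_def JWX_def
  by (rule derivative_eq_intros refl)+ (simp add: algebra_simps)
lemma JXX_deriv [derivative_intros]: "((\<lambda>x. JX U W x Y) has_field_derivative JXX U W x Y) (at x within S)"
  unfolding JX_def JXX_def
  by (rule derivative_eq_intros refl)+ (simp add: algebra_simps)
lemma JXY_deriv [derivative_intros]: "((\<lambda>y. JX U W X y) has_field_derivative JXY U W X y) (at y within S)"
  unfolding JX_def JXY_def
  by (rule derivative_eq_intros refl)+ (simp add: algebra_simps)
lemma JYX_deriv [derivative_intros]: "((\<lambda>x. JY U W x Y) has_field_derivative JXY U W x Y) (at x within S)"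
  unfolding JY_def JXY_def
  by (rule derivative_eq_intros refl)+ (simp add: algebra_simps)
lemma JYY_deriv [derivative_intros]: "((\<lambda>y. JY U W X y) has_field_derivative JXX U W X y) (at y within S)"
  unfolding JY_def JXX_def
  by (rule derivative_eq_intros refl)+ (simp add: algebra_simps)

definition Q :: "complex \<Rightarrow> complex \<Rightarrow> complex \<Rightarrow> complex \<Rightarrow> complex \<Rightarrow> complex" where
  "Q s U W X Y = (1 + Jp U W X Y) powr s"

definition V :: "complex \<Rightarrow> complex \<Rightarrow> complex \<Rightarrow> complex \<Rightarrow> bool" where
  "V U W X Y \<longleftrightarrow> good U \<and> 1 + Jp U W X Y \<notin> \<real>\<^sub>\<le>\<^sub>0"

definition "Kp U W X Y = - (3/4) * P U (2/3) * W^2 - P U (-2/3) / 3 * (Q (-1/2) U W X Y - 1)"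

definition "KU U W X Y = -(1/2)*P U (-1/3)*W^2 + 2/9*P U (-5/3)*(Q (-1/2) U W X Y - 1)
   + 1/6*P U (-2/3)*Q (-3/2) U W X Y*JU U W X Y"
definition "KW U W X Y = -(3/2)*P U (2/3)*W + 1/6*P U (-2/3)*Q (-3/2) U W X Y*JW U W X Y"
definition "KX U W X Y = 1/6*P U (-2/3)*Q (-3/2) U W X Y*JX U W X Y"
definition "KY U W X Y = 1/6*P U (-2/3)*Q (-3/2) U W X Y*JY U W X Y"

definition "T2 U W X Y a b ab = 1/6*P U (-2/3)*(-3/2*Q (-5/2) U W X Y*b*a + Q (-3/2) U W X Y*ab)"

definition "KUW U W X Y = -P U (-1/3)*W - 1/9*P U (-5/3)*Q (-3/2) U W X Y*JW U W X Y
   + T2 U W X Y (JU U W X Y) (JW U W X Y) (JUW U W X Y)"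
definition "KUX U W X Y = - 1/9*P U (-5/3)*Q (-3/2) U W X Y*JX U W X Y
   + T2 U W X Y (JU U W X Y) (JX U W X Y) (JUX U W X Y)"
definition "KUY U W X Y = - 1/9*P U (-5/3)*Q (-3/2) U W X Y*JY U W X Y
   + T2 U W X Y (JU U W X Y) (JY U W X Y) (JUY U W X Y)"
definition "KWW U W X Y = -3/2*P U (2/3) + T2 U W X Y (JW U W X Y) (JW U W X Y) (JWW U W X Y)"
definition "KWX U W X Y = T2 U W X Y (JW U W X Y) (JX U W X Y) (JWX U W X Y)"
definition "KWY U W X Y = T2 U W X Y (JW U W X Y) (JY U W X Y) (JWX U W X Y)"
definition "KXW U W X Y = T2 U W X Y (JX U W X Y) (JW U W X Y) (JWX U W X Y)"
definition "KXX U W X Y = T2 U W X Y (JX U W X Y) (JX U W X Y) (JXX U W X Y)"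
definition "KXY U W X Y = T2 U W X Y (JX U W X Y) (JY U W X Y) (JXY U W X Y)"
definition "KYW U W X Y = T2 U W X Y (JY U W X Y) (JW U W X Y) (JWX U W X Y)"
definition "KYX U W X Y = T2 U W X Y (JY U W X Y) (JX U W X Y) (JXY U W X Y)"
definition "KYY U W X Y = T2 U W X Y (JY U W X Y) (JY U W X Y) (JXX U W X Y)"

lemma Kf_eq: "U \<noteq> 0 \<Longrightarrow> Kf U W X Y = Kp U W X Y"
proof -
  assume U: "U \<noteq> 0"
  have e: "P U (-2/3) = inverse (P U (2/3))" using powD_minus[of U "2/3"] by simp
  have "1 / (3 * P U (2/3)) = P U (-2/3) / 3" unfolding e using powD_nz[of U "2/3"]
    by (simp add: field_simps)
  then show ?thesis unfolding Kf_def Kp_def Q_def Jf_eq[OF U] by (simp only:)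
qed



declare JU_deriv [derivative_intros]

lemma KU_deriv: "V U W X Y \<Longrightarrow> ((\<lambda>u. Kp u W X Y) has_field_derivative KU U W X Y) (at U)"
  unfolding V_def Kp_def KU_def Q_def
  apply (elim conjE)
  apply (assumption | rule derivative_eq_intros refl | (simp; fail) | (simp add: algebra_simps; fail) | (simp add: field_simps; fail))+
  done

lemma KW_deriv: "V U W X Y \<Longrightarrow> ((\<lambda>w. Kp U w X Y) has_field_derivative KW U W X Y) (at W)"
  unfolding V_def Kp_def KW_def Q_def
  apply (elim conjE)
  apply (assumption | rule derivative_eq_intros refl | (simp; fail) | (simp add: algebra_simps; fail) | (simp add: field_simps; fail))+
  done

lemma KX_deriv: "V U W X Y \<Longrightarrow> ((\<lambda>x. Kp U W x Y) has_field_derivative KX U W X Y) (at X)"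
  unfolding V_def Kp_def KX_def Q_def
  apply (elim conjE)
  apply (assumption | rule derivative_eq_intros refl | (simp; fail) | (simp add: algebra_simps; fail) | (simp add: field_simps; fail))+
  done

lemma KY_deriv: "V U W X Y \<Longrightarrow> ((\<lambda>y. Kp U W X y) has_field_derivative KY U W X Y) (at Y)"
  unfolding V_def Kp_def KY_def Q_def
  apply (elim conjE)
  apply (assumption | rule derivative_eq_intros refl | (simp; fail) | (simp add: algebra_simps; fail) | (simp add: field_simps; fail))+
  done

lemma KUW_deriv: "V U W X Y \<Longrightarrow> ((\<lambda>w. KU U w X Y) has_field_derivative KUW U W X Y) (at W)"
  unfolding V_def KU_def KUW_def T2_def Q_def
  apply (elim conjE)
  apply (assumption | rule derivative_eq_intros refl | (simp; fail) | (simp add: algebra_simps; fail) | (simp add: field_simps; fail))+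
  done

lemma KUX_deriv: "V U W X Y \<Longrightarrow> ((\<lambda>x. KU U W x Y) has_field_derivative KUX U W X Y) (at X)"
  unfolding V_def KU_def KUX_def T2_def Q_def
  apply (elim conjE)
  apply (assumption | rule derivative_eq_intros refl | (simp; fail) | (simp add: algebra_simps; fail) | (simp add: field_simps; fail))+
  done

lemma KUY_deriv: "V U W X Y \<Longrightarrow> ((\<lambda>y. KU U W X y) has_field_derivative KUY U W X Y) (at Y)"
  unfolding V_def KU_def KUY_def T2_def Q_def
  apply (elim conjE)
  apply (assumption | rule derivative_eq_intros refl | (simp; fail) | (simp add: algebra_simps; fail) | (simp add: field_simps; fail))+
  done

lemma KWW_deriv: "V U W X Y \<Longrightarrow> ((\<lambda>w. KW U w X Y) has_field_derivative KWW U W X Y) (at W)"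
  unfolding V_def KW_def KWW_def T2_def Q_def
  apply (elim conjE)
  apply (assumption | rule derivative_eq_intros refl | (simp; fail) | (simp add: algebra_simps; fail) | (simp add: field_simps; fail))+
  done

lemma KWX_deriv: "V U W X Y \<Longrightarrow> ((\<lambda>x. KW U W x Y) has_field_derivative KWX U W X Y) (at X)"
  unfolding V_def KW_def KWX_def T2_def Q_def
  apply (elim conjE)
  apply (assumption | rule derivative_eq_intros refl | (simp; fail) | (simp add: algebra_simps; fail) | (simp add: field_simps; fail))+
  done

lemma KWY_deriv: "V U W X Y \<Longrightarrow> ((\<lambda>y. KW U W X y) has_field_derivative KWY U W X Y) (at Y)"
  unfolding V_def KW_def KWY_def T2_def Q_def
  apply (elim conjE)
  apply (assumption | rule derivative_eq_intros refl | (simp; fail) | (simp add: algebra_simps; fail) | (simp add: field_simps; fail))+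
  done

lemma KXW_deriv: "V U W X Y \<Longrightarrow> ((\<lambda>w. KX U w X Y) has_field_derivative KXW U W X Y) (at W)"
  unfolding V_def KX_def KXW_def T2_def Q_def
  apply (elim conjE)
  apply (assumption | rule derivative_eq_intros refl | (simp; fail) | (simp add: algebra_simps; fail) | (simp add: field_simps; fail))+
  done

lemma KXX_deriv: "V U W X Y \<Longrightarrow> ((\<lambda>x. KX U W x Y) has_field_derivative KXX U W X Y) (at X)"
  unfolding V_def KX_def KXX_def T2_def Q_def
  apply (elim conjE)
  apply (assumption | rule derivative_eq_intros refl | (simp; fail) | (simp add: algebra_simps; fail) | (simp add: field_simps; fail))+
  done

lemma KXY_deriv: "V U W X Y \<Longrightarrow> ((\<lambda>y. KX U W X y) has_field_derivative KXY U W X Y) (at Y)"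
  unfolding V_def KX_def KXY_def T2_def Q_def
  apply (elim conjE)
  apply (assumption | rule derivative_eq_intros refl | (simp; fail) | (simp add: algebra_simps; fail) | (simp add: field_simps; fail))+
  done

lemma KYW_deriv: "V U W X Y \<Longrightarrow> ((\<lambda>w. KY U w X Y) has_field_derivative KYW U W X Y) (at W)"
  unfolding V_def KY_def KYW_def T2_def Q_def
  apply (elim conjE)
  apply (assumption | rule derivative_eq_intros refl | (simp; fail) | (simp add: algebra_simps; fail) | (simp add: field_simps; fail))+
  done

lemma KYX_deriv: "V U W X Y \<Longrightarrow> ((\<lambda>x. KY U W x Y) has_field_derivative KYX U W X Y) (at X)"
  unfolding V_def KY_def KYX_def T2_def Q_def
  apply (elim conjE)
  apply (assumption | rule derivative_eq_intros refl | (simp; fail) | (simp add: algebra_simps; fail) | (simp add: field_simps; fail))+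
  done

lemma KYY_deriv: "V U W X Y \<Longrightarrow> ((\<lambda>y. KY U W X y) has_field_derivative KYY U W X Y) (at Y)"
  unfolding V_def KY_def KYY_def T2_def Q_def
  apply (elim conjE)
  apply (assumption | rule derivative_eq_intros refl | (simp; fail) | (simp add: algebra_simps; fail) | (simp add: field_simps; fail))+
  done

lemma V_good: "V U W X Y \<Longrightarrow> good U" by (simp add: V_def)

lemma gK_eq: "V U W X Y \<Longrightarrow> gK U W X Y = KW U W X Y"
proof -
  assume v: "V U W X Y"
  have nz: "U \<noteq> 0" using v V_good good_nz by blast
  have "(\<lambda>w. Kf U w X Y) = (\<lambda>w. Kp U w X Y)" using Kf_eq[OF nz] by auto
  then show ?thesis unfolding gK_def using DERIV_imp_deriv[OF KW_deriv[OF v]] by simp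
qed

lemma f2_eq: "V U W X Y \<Longrightarrow> f2 U W X Y = \<i> * KY U W X Y"
proof -
  assume v: "V U W X Y"
  have nz: "U \<noteq> 0" using v V_good good_nz by blast
  have "(\<lambda>y. Kf U W X y) = (\<lambda>y. Kp U W X y)" using Kf_eq[OF nz] by auto
  then show ?thesis unfolding f2_def using DERIV_imp_deriv[OF KY_deriv[OF v]] by simp
qed

lemma f3_eq: "V U W X Y \<Longrightarrow> f3 U W X Y = - \<i> * KX U W X Y"
proof -
  assume v: "V U W X Y"
  have nz: "U \<noteq> 0" using v V_good good_nz by blast
  have "(\<lambda>x. Kf U W x Y) = (\<lambda>x. Kp U W x Y)" using Kf_eq[OF nz] by auto
  then show ?thesis unfolding f3_def using DERIV_imp_deriv[OF KX_deriv[OF v]] by simp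
qed

lemma f1_eq: "V U W X Y \<Longrightarrow> f1 U W X Y = - KU U W X Y"
proof -
  assume v: "V U W X Y"
  have "((\<lambda>u. Kf u W X Y) has_field_derivative KU U W X Y) (at U)"
    by (rule has_field_derivative_transform_within_open[OF KU_deriv[OF v] good_open])
       (use v V_good Kf_eq good_nz in auto)
  then show ?thesis unfolding f1_def using DERIV_imp_deriv by metis
qed

definition "Dn U W X Y = inverse (1 + KW U W X Y)"

lemma R1_eq: "V U W X Y \<Longrightarrow> R1 U W X Y = - KU U W X Y * Dn U W X Y"
  by (simp add: R1_def f1_eq gK_eq Dn_def divide_inverse)
lemma R2_eq: "V U W X Y \<Longrightarrow> R2 U W X Y = (\<i> * KY U W X Y - KW U W X Y * (\<i> * X)) * Dn U W X Y"
  by (simp add: R2_def f2_eq gK_eq Dn_def divide_inverse)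
lemma R3_eq: "V U W X Y \<Longrightarrow> R3 U W X Y = (- \<i> * KX U W X Y - KW U W X Y * (- \<i> * Y)) * Dn U W X Y"
  by (simp add: R3_def f3_eq gK_eq Dn_def divide_inverse)

lemma Jp_cont_w: "continuous_on UNIV (\<lambda>w. 1 + Jp U w X Y)"
proof (intro continuous_at_imp_continuous_on ballI)
  fix w
  have "((\<lambda>w. 1 + Jp U w X Y) has_field_derivative 0 + JW U w X Y) (at w)"
    by (intro DERIV_add DERIV_const JW_deriv)
  then show "isCont (\<lambda>w. 1 + Jp U w X Y) w" by (rule DERIV_isCont)
qed
lemma Jp_cont_x: "continuous_on UNIV (\<lambda>x. 1 + Jp U W x Y)"
proof (intro continuous_at_imp_continuous_on ballI)
  fix x
  have "((\<lambda>x. 1 + Jp U W x Y) has_field_derivative 0 + JX U W x Y) (at x)"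
    by (intro DERIV_add DERIV_const JX_deriv)
  then show "isCont (\<lambda>x. 1 + Jp U W x Y) x" by (rule DERIV_isCont)
qed
lemma Jp_cont_y: "continuous_on UNIV (\<lambda>y. 1 + Jp U W X y)"
proof (intro continuous_at_imp_continuous_on ballI)
  fix y
  have "((\<lambda>y. 1 + Jp U W X y) has_field_derivative 0 + JY U W X y) (at y)"
    by (intro DERIV_add DERIV_const JY_deriv)
  then show "isCont (\<lambda>y. 1 + Jp U W X y) y" by (rule DERIV_isCont)
qed
lemma open_Sw: "open {w. 1 + Jp U w X Y \<notin> \<real>\<^sub>\<le>\<^sub>0}"
proof -
  have "open ((\<lambda>w. 1 + Jp U w X Y) -` (- \<real>\<^sub>\<le>\<^sub>0) \<inter> UNIV)"
    using Jp_cont_w[of U X Y] continuous_on_open_vimage[of UNIV] open_Compl[OF closed_nonpos_Reals_complex] open_UNIV by blast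
  then show ?thesis by (simp add: vimage_def Compl_eq)
qed
lemma open_Sx: "open {x. 1 + Jp U W x Y \<notin> \<real>\<^sub>\<le>\<^sub>0}"
proof -
  have "open ((\<lambda>x. 1 + Jp U W x Y) -` (- \<real>\<^sub>\<le>\<^sub>0) \<inter> UNIV)"
    using Jp_cont_x[of U W Y] continuous_on_open_vimage[of UNIV] open_Compl[OF closed_nonpos_Reals_complex] open_UNIV by blast
  then show ?thesis by (simp add: vimage_def Compl_eq)
qed
lemma open_Sy: "open {y. 1 + Jp U W X y \<notin> \<real>\<^sub>\<le>\<^sub>0}"
proof -
  have "open ((\<lambda>y. 1 + Jp U W X y) -` (- \<real>\<^sub>\<le>\<^sub>0) \<inter> UNIV)"
    using Jp_cont_y[of U W X] continuous_on_open_vimage[of UNIV] open_Compl[OF closed_nonpos_Reals_complex] open_UNIV by blast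
  then show ?thesis by (simp add: vimage_def Compl_eq)
qed


lemma R1_div: "V U W X Y \<Longrightarrow> R1 U W X Y = - KU U W X Y / (1 + KW U W X Y)"
  by (simp add: R1_def f1_eq gK_eq)
lemma R2_div: "V U W X Y \<Longrightarrow> R2 U W X Y = (\<i> * KY U W X Y - KW U W X Y * (\<i> * X)) / (1 + KW U W X Y)"
  by (simp add: R2_def f2_eq gK_eq)
lemma R3_div: "V U W X Y \<Longrightarrow> R3 U W X Y = (- \<i> * KX U W X Y - KW U W X Y * (- \<i> * Y)) / (1 + KW U W X Y)"
  by (simp add: R3_def f3_eq gK_eq)

lemmas Kderivs = KUW_deriv KUX_deriv KUY_deriv KWW_deriv KWX_deriv KWY_deriv KXW_deriv KXX_deriv KXY_deriv
  KYW_deriv KYX_deriv KYY_deriv KW_deriv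

lemma quot_rw: "(g::complex) \<noteq> 0 \<Longrightarrow> (D * g - f * E) / (g * g) = D * inverse g - f * E * (inverse g)^2"
  by (simp add: field_simps power2_eq_square)

lemma dWR1_eq: assumes v: "V U W X Y" and nz: "1 + KW U W X Y \<noteq> 0"
  shows "dW R1 U W X Y = (- KUW U W X Y) * Dn U W X Y - (- KU U W X Y) * KWW U W X Y * (Dn U W X Y)^2"
proof -
  have n: "((\<lambda>w. - KU U w X Y) has_field_derivative - KUW U W X Y) (at W)"
    apply (insert v)
    apply (assumption | rule derivative_eq_intros Kderivs refl | (simp; fail) | (simp add: algebra_simps; fail))+
    done
  have d: "((\<lambda>w. 1 + KW U w X Y) has_field_derivative KWW U W X Y) (at W)"
    using DERIV_add[OF DERIV_const KWW_deriv[OF v]] by simp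
  have "((\<lambda>w. (- KU U w X Y) / (1 + KW U w X Y)) has_field_derivative (- KUW U W X Y) * Dn U W X Y - (- KU U W X Y) * KWW U W X Y * (Dn U W X Y)^2) (at W)"
    using DERIV_divide[OF n d nz] unfolding quot_rw[OF nz] Dn_def .
  then have "((\<lambda>w. R1 U w X Y) has_field_derivative (- KUW U W X Y) * Dn U W X Y - (- KU U W X Y) * KWW U W X Y * (Dn U W X Y)^2) (at W)"
    by (rule has_field_derivative_transform_within_open[OF _ open_Sw])
       (use v in \<open>auto simp: V_def R1_div\<close>)
  then show ?thesis unfolding dW_def by (rule DERIV_imp_deriv)
qed

lemma dXR1_eq: assumes v: "V U W X Y" and nz: "1 + KW U W X Y \<noteq> 0"
  shows "dX R1 U W X Y = (- KUX U W X Y) * Dn U W X Y - (- KU U W X Y) * KWX U W X Y * (Dn U W X Y)^2"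
proof -
  have n: "((\<lambda>x. - KU U W x Y) has_field_derivative - KUX U W X Y) (at X)"
    apply (insert v)
    apply (assumption | rule derivative_eq_intros Kderivs refl | (simp; fail) | (simp add: algebra_simps; fail))+
    done
  have d: "((\<lambda>x. 1 + KW U W x Y) has_field_derivative KWX U W X Y) (at X)"
    using DERIV_add[OF DERIV_const KWX_deriv[OF v]] by simp
  have "((\<lambda>x. (- KU U W x Y) / (1 + KW U W x Y)) has_field_derivative (- KUX U W X Y) * Dn U W X Y - (- KU U W X Y) * KWX U W X Y * (Dn U W X Y)^2) (at X)"
    using DERIV_divide[OF n d nz] unfolding quot_rw[OF nz] Dn_def .
  then have "((\<lambda>x. R1 U W x Y) has_field_derivative (- KUX U W X Y) * Dn U W X Y - (- KU U W X Y) * KWX U W X Y * (Dn U W X Y)^2) (at X)"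
    by (rule has_field_derivative_transform_within_open[OF _ open_Sx])
       (use v in \<open>auto simp: V_def R1_div\<close>)
  then show ?thesis unfolding dX_def by (rule DERIV_imp_deriv)
qed

lemma dYR1_eq: assumes v: "V U W X Y" and nz: "1 + KW U W X Y \<noteq> 0"
  shows "dY R1 U W X Y = (- KUY U W X Y) * Dn U W X Y - (- KU U W X Y) * KWY U W X Y * (Dn U W X Y)^2"
proof -
  have n: "((\<lambda>y. - KU U W X y) has_field_derivative - KUY U W X Y) (at Y)"
    apply (insert v)
    apply (assumption | rule derivative_eq_intros Kderivs refl | (simp; fail) | (simp add: algebra_simps; fail))+
    done
  have d: "((\<lambda>y. 1 + KW U W X y) has_field_derivative KWY U W X Y) (at Y)"
    using DERIV_add[OF DERIV_const KWY_deriv[OF v]] by simp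
  have "((\<lambda>y. (- KU U W X y) / (1 + KW U W X y)) has_field_derivative (- KUY U W X Y) * Dn U W X Y - (- KU U W X Y) * KWY U W X Y * (Dn U W X Y)^2) (at Y)"
    using DERIV_divide[OF n d nz] unfolding quot_rw[OF nz] Dn_def .
  then have "((\<lambda>y. R1 U W X y) has_field_derivative (- KUY U W X Y) * Dn U W X Y - (- KU U W X Y) * KWY U W X Y * (Dn U W X Y)^2) (at Y)"
    by (rule has_field_derivative_transform_within_open[OF _ open_Sy])
       (use v in \<open>auto simp: V_def R1_div\<close>)
  then show ?thesis unfolding dY_def by (rule DERIV_imp_deriv)
qed

lemma dWR2_eq: assumes v: "V U W X Y" and nz: "1 + KW U W X Y \<noteq> 0"
  shows "dW R2 U W X Y = (\<i> * KYW U W X Y - KWW U W X Y * (\<i> * X)) * Dn U W X Y - (\<i> * KY U W X Y - KW U W X Y * (\<i> * X)) * KWW U W X Y * (Dn U W X Y)^2"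
proof -
  have n: "((\<lambda>w. \<i> * KY U w X Y - KW U w X Y * (\<i> * X)) has_field_derivative \<i> * KYW U W X Y - KWW U W X Y * (\<i> * X)) (at W)"
    apply (insert v)
    apply (assumption | rule derivative_eq_intros Kderivs refl | (simp; fail) | (simp add: algebra_simps; fail))+
    done
  have d: "((\<lambda>w. 1 + KW U w X Y) has_field_derivative KWW U W X Y) (at W)"
    using DERIV_add[OF DERIV_const KWW_deriv[OF v]] by simp
  have "((\<lambda>w. (\<i> * KY U w X Y - KW U w X Y * (\<i> * X)) / (1 + KW U w X Y)) has_field_derivative (\<i> * KYW U W X Y - KWW U W X Y * (\<i> * X)) * Dn U W X Y - (\<i> * KY U W X Y - KW U W X Y * (\<i> * X)) * KWW U W X Y * (Dn U W X Y)^2) (at W)"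
    using DERIV_divide[OF n d nz] unfolding quot_rw[OF nz] Dn_def .
  then have "((\<lambda>w. R2 U w X Y) has_field_derivative (\<i> * KYW U W X Y - KWW U W X Y * (\<i> * X)) * Dn U W X Y - (\<i> * KY U W X Y - KW U W X Y * (\<i> * X)) * KWW U W X Y * (Dn U W X Y)^2) (at W)"
    by (rule has_field_derivative_transform_within_open[OF _ open_Sw])
       (use v in \<open>auto simp: V_def R2_div\<close>)
  then show ?thesis unfolding dW_def by (rule DERIV_imp_deriv)
qed

lemma dXR2_eq: assumes v: "V U W X Y" and nz: "1 + KW U W X Y \<noteq> 0"
  shows "dX R2 U W X Y = (\<i> * KYX U W X Y - (KWX U W X Y * (\<i> * X) + KW U W X Y * \<i>)) * Dn U W X Y - (\<i> * KY U W X Y - KW U W X Y * (\<i> * X)) * KWX U W X Y * (Dn U W X Y)^2"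
proof -
  have n: "((\<lambda>x. \<i> * KY U W x Y - KW U W x Y * (\<i> * x)) has_field_derivative \<i> * KYX U W X Y - (KWX U W X Y * (\<i> * X) + KW U W X Y * \<i>)) (at X)"
    apply (insert v)
    apply (assumption | rule derivative_eq_intros Kderivs refl | (simp; fail) | (simp add: algebra_simps; fail))+
    done
  have d: "((\<lambda>x. 1 + KW U W x Y) has_field_derivative KWX U W X Y) (at X)"
    using DERIV_add[OF DERIV_const KWX_deriv[OF v]] by simp
  have "((\<lambda>x. (\<i> * KY U W x Y - KW U W x Y * (\<i> * x)) / (1 + KW U W x Y)) has_field_derivative (\<i> * KYX U W X Y - (KWX U W X Y * (\<i> * X) + KW U W X Y * \<i>)) * Dn U W X Y - (\<i> * KY U W X Y - KW U W X Y * (\<i> * X)) * KWX U W X Y * (Dn U W X Y)^2) (at X)"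
    using DERIV_divide[OF n d nz] unfolding quot_rw[OF nz] Dn_def .
  then have "((\<lambda>x. R2 U W x Y) has_field_derivative (\<i> * KYX U W X Y - (KWX U W X Y * (\<i> * X) + KW U W X Y * \<i>)) * Dn U W X Y - (\<i> * KY U W X Y - KW U W X Y * (\<i> * X)) * KWX U W X Y * (Dn U W X Y)^2) (at X)"
    by (rule has_field_derivative_transform_within_open[OF _ open_Sx])
       (use v in \<open>auto simp: V_def R2_div\<close>)
  then show ?thesis unfolding dX_def by (rule DERIV_imp_deriv)
qed

lemma dYR2_eq: assumes v: "V U W X Y" and nz: "1 + KW U W X Y \<noteq> 0"
  shows "dY R2 U W X Y = (\<i> * KYY U W X Y - KWY U W X Y * (\<i> * X)) * Dn U W X Y - (\<i> * KY U W X Y - KW U W X Y * (\<i> * X)) * KWY U W X Y * (Dn U W X Y)^2"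
proof -
  have n: "((\<lambda>y. \<i> * KY U W X y - KW U W X y * (\<i> * X)) has_field_derivative \<i> * KYY U W X Y - KWY U W X Y * (\<i> * X)) (at Y)"
    apply (insert v)
    apply (assumption | rule derivative_eq_intros Kderivs refl | (simp; fail) | (simp add: algebra_simps; fail))+
    done
  have d: "((\<lambda>y. 1 + KW U W X y) has_field_derivative KWY U W X Y) (at Y)"
    using DERIV_add[OF DERIV_const KWY_deriv[OF v]] by simp
  have "((\<lambda>y. (\<i> * KY U W X y - KW U W X y * (\<i> * X)) / (1 + KW U W X y)) has_field_derivative (\<i> * KYY U W X Y - KWY U W X Y * (\<i> * X)) * Dn U W X Y - (\<i> * KY U W X Y - KW U W X Y * (\<i> * X)) * KWY U W X Y * (Dn U W X Y)^2) (at Y)"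
    using DERIV_divide[OF n d nz] unfolding quot_rw[OF nz] Dn_def .
  then have "((\<lambda>y. R2 U W X y) has_field_derivative (\<i> * KYY U W X Y - KWY U W X Y * (\<i> * X)) * Dn U W X Y - (\<i> * KY U W X Y - KW U W X Y * (\<i> * X)) * KWY U W X Y * (Dn U W X Y)^2) (at Y)"
    by (rule has_field_derivative_transform_within_open[OF _ open_Sy])
       (use v in \<open>auto simp: V_def R2_div\<close>)
  then show ?thesis unfolding dY_def by (rule DERIV_imp_deriv)
qed

lemma dWR3_eq: assumes v: "V U W X Y" and nz: "1 + KW U W X Y \<noteq> 0"
  shows "dW R3 U W X Y = (- \<i> * KXW U W X Y - KWW U W X Y * (- \<i> * Y)) * Dn U W X Y - (- \<i> * KX U W X Y - KW U W X Y * (- \<i> * Y)) * KWW U W X Y * (Dn U W X Y)^2"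
proof -
  have n: "((\<lambda>w. - \<i> * KX U w X Y - KW U w X Y * (- \<i> * Y)) has_field_derivative - \<i> * KXW U W X Y - KWW U W X Y * (- \<i> * Y)) (at W)"
    apply (insert v)
    apply (assumption | rule derivative_eq_intros Kderivs refl | (simp; fail) | (simp add: algebra_simps; fail))+
    done
  have d: "((\<lambda>w. 1 + KW U w X Y) has_field_derivative KWW U W X Y) (at W)"
    using DERIV_add[OF DERIV_const KWW_deriv[OF v]] by simp
  have "((\<lambda>w. (- \<i> * KX U w X Y - KW U w X Y * (- \<i> * Y)) / (1 + KW U w X Y)) has_field_derivative (- \<i> * KXW U W X Y - KWW U W X Y * (- \<i> * Y)) * Dn U W X Y - (- \<i> * KX U W X Y - KW U W X Y * (- \<i> * Y)) * KWW U W X Y * (Dn U W X Y)^2) (at W)"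
    using DERIV_divide[OF n d nz] unfolding quot_rw[OF nz] Dn_def .
  then have "((\<lambda>w. R3 U w X Y) has_field_derivative (- \<i> * KXW U W X Y - KWW U W X Y * (- \<i> * Y)) * Dn U W X Y - (- \<i> * KX U W X Y - KW U W X Y * (- \<i> * Y)) * KWW U W X Y * (Dn U W X Y)^2) (at W)"
    by (rule has_field_derivative_transform_within_open[OF _ open_Sw])
       (use v in \<open>auto simp: V_def R3_div\<close>)
  then show ?thesis unfolding dW_def by (rule DERIV_imp_deriv)
qed

lemma dXR3_eq: assumes v: "V U W X Y" and nz: "1 + KW U W X Y \<noteq> 0"
  shows "dX R3 U W X Y = (- \<i> * KXX U W X Y - KWX U W X Y * (- \<i> * Y)) * Dn U W X Y - (- \<i> * KX U W X Y - KW U W X Y * (- \<i> * Y)) * KWX U W X Y * (Dn U W X Y)^2"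
proof -
  have n: "((\<lambda>x. - \<i> * KX U W x Y - KW U W x Y * (- \<i> * Y)) has_field_derivative - \<i> * KXX U W X Y - KWX U W X Y * (- \<i> * Y)) (at X)"
    apply (insert v)
    apply (assumption | rule derivative_eq_intros Kderivs refl | (simp; fail) | (simp add: algebra_simps; fail))+
    done
  have d: "((\<lambda>x. 1 + KW U W x Y) has_field_derivative KWX U W X Y) (at X)"
    using DERIV_add[OF DERIV_const KWX_deriv[OF v]] by simp
  have "((\<lambda>x. (- \<i> * KX U W x Y - KW U W x Y * (- \<i> * Y)) / (1 + KW U W x Y)) has_field_derivative (- \<i> * KXX U W X Y - KWX U W X Y * (- \<i> * Y)) * Dn U W X Y - (- \<i> * KX U W X Y - KW U W X Y * (- \<i> * Y)) * KWX U W X Y * (Dn U W X Y)^2) (at X)"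
    using DERIV_divide[OF n d nz] unfolding quot_rw[OF nz] Dn_def .
  then have "((\<lambda>x. R3 U W x Y) has_field_derivative (- \<i> * KXX U W X Y - KWX U W X Y * (- \<i> * Y)) * Dn U W X Y - (- \<i> * KX U W X Y - KW U W X Y * (- \<i> * Y)) * KWX U W X Y * (Dn U W X Y)^2) (at X)"
    by (rule has_field_derivative_transform_within_open[OF _ open_Sx])
       (use v in \<open>auto simp: V_def R3_div\<close>)
  then show ?thesis unfolding dX_def by (rule DERIV_imp_deriv)
qed

lemma dYR3_eq: assumes v: "V U W X Y" and nz: "1 + KW U W X Y \<noteq> 0"
  shows "dY R3 U W X Y = (- \<i> * KXY U W X Y - (KWY U W X Y * (- \<i> * Y) + KW U W X Y * (- \<i>))) * Dn U W X Y - (- \<i> * KX U W X Y - KW U W X Y * (- \<i> * Y)) * KWY U W X Y * (Dn U W X Y)^2"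
proof -
  have n: "((\<lambda>y. - \<i> * KX U W X y - KW U W X y * (- \<i> * y)) has_field_derivative - \<i> * KXY U W X Y - (KWY U W X Y * (- \<i> * Y) + KW U W X Y * (- \<i>))) (at Y)"
    apply (insert v)
    apply (assumption | rule derivative_eq_intros Kderivs refl | (simp; fail) | (simp add: algebra_simps; fail))+
    done
  have d: "((\<lambda>y. 1 + KW U W X y) has_field_derivative KWY U W X Y) (at Y)"
    using DERIV_add[OF DERIV_const KWY_deriv[OF v]] by simp
  have "((\<lambda>y. (- \<i> * KX U W X y - KW U W X y * (- \<i> * y)) / (1 + KW U W X y)) has_field_derivative (- \<i> * KXY U W X Y - (KWY U W X Y * (- \<i> * Y) + KW U W X Y * (- \<i>))) * Dn U W X Y - (- \<i> * KX U W X Y - KW U W X Y * (- \<i> * Y)) * KWY U W X Y * (Dn U W X Y)^2) (at Y)"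
    using DERIV_divide[OF n d nz] unfolding quot_rw[OF nz] Dn_def .
  then have "((\<lambda>y. R3 U W X y) has_field_derivative (- \<i> * KXY U W X Y - (KWY U W X Y * (- \<i> * Y) + KW U W X Y * (- \<i>))) * Dn U W X Y - (- \<i> * KX U W X Y - KW U W X Y * (- \<i> * Y)) * KWY U W X Y * (Dn U W X Y)^2) (at Y)"
    by (rule has_field_derivative_transform_within_open[OF _ open_Sy])
       (use v in \<open>auto simp: V_def R3_div\<close>)
  then show ?thesis unfolding dY_def by (rule DERIV_imp_deriv)
qed

definition inS :: "real \<Rightarrow> real \<Rightarrow> complex \<Rightarrow> complex \<Rightarrow> complex \<Rightarrow> complex \<Rightarrow> bool" where
  "inS rho L U W X Y \<longleftrightarrow> good U \<and> L \<le> cmod U \<and> cmod W \<le> rho * cmod U powr (-8/3)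
     \<and> cmod X \<le> rho * cmod U powr (-4/3) \<and> cmod Y \<le> rho * cmod U powr (-4/3)"

definition bnd :: "real \<Rightarrow> real \<Rightarrow> real \<Rightarrow> (complex \<Rightarrow> complex \<Rightarrow> complex \<Rightarrow> complex \<Rightarrow> complex) \<Rightarrow> bool" where
  "bnd rho L e F \<longleftrightarrow> (\<exists>c. \<forall>U W X Y. inS rho L U W X Y \<longrightarrow> cmod (F U W X Y) \<le> c * cmod U powr e)"

lemma inS_pos: "inS rho L U W X Y \<Longrightarrow> 0 < cmod U"
  using good_nz by (auto simp: inS_def)

lemma bndE: assumes "bnd rho L e F"
  obtains c where "c \<ge> 0" "\<And>U W X Y. inS rho L U W X Y \<Longrightarrow> cmod (F U W X Y) \<le> c * cmod U powr e"
proof -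
  obtain c where c: "\<And>U W X Y. inS rho L U W X Y \<Longrightarrow> cmod (F U W X Y) \<le> c * cmod U powr e"
    using assms unfolding bnd_def by blast
  show ?thesis
  proof (rule that[of "max c 0"])
    fix U W X Y assume h: "inS rho L U W X Y"
    have "c * cmod U powr e \<le> max c 0 * cmod U powr e"
      by (intro mult_right_mono) auto
    then show "cmod (F U W X Y) \<le> max c 0 * cmod U powr e" using c[OF h] by linarith
  qed simp
qed

lemma bndI: "(\<And>U W X Y. inS rho L U W X Y \<Longrightarrow> cmod (F U W X Y) \<le> c * cmod U powr e) \<Longrightarrow> bnd rho L e F"
  unfolding bnd_def by blast

lemma bnd_const: "bnd rho L 0 (\<lambda>U W X Y. k)"
  by (rule bndI[of _ _ _ "cmod k"]) (use inS_pos in fastforce)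

lemma bnd_P: "bnd rho L a (\<lambda>U W X Y. powD U a)"
  by (rule bndI[of _ _ _ 1]) (auto simp: inS_def norm_powD good_nz)

lemma bnd_W: "bnd rho L (-8/3) (\<lambda>U W X Y. W)"
  by (rule bndI[of _ _ _ rho]) (auto simp: inS_def)
lemma bnd_X: "bnd rho L (-4/3) (\<lambda>U W X Y. X)"
  by (rule bndI[of _ _ _ rho]) (auto simp: inS_def)
lemma bnd_Y: "bnd rho L (-4/3) (\<lambda>U W X Y. Y)"
  by (rule bndI[of _ _ _ rho]) (auto simp: inS_def)

lemma bnd_mult: assumes "bnd rho L e1 F" "bnd rho L e2 G"
  shows "bnd rho L (e1 + e2) (\<lambda>U W X Y. F U W X Y * G U W X Y)"
proof -
  obtain c1 where c1: "c1 \<ge> 0" "\<And>U W X Y. inS rho L U W X Y \<Longrightarrow> cmod (F U W X Y) \<le> c1 * cmod U powr e1"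
    by (rule bndE[OF assms(1)]) blast
  obtain c2 where c2: "c2 \<ge> 0" "\<And>U W X Y. inS rho L U W X Y \<Longrightarrow> cmod (G U W X Y) \<le> c2 * cmod U powr e2"
    by (rule bndE[OF assms(2)]) blast
  show ?thesis
  proof (rule bndI[of _ _ _ "c1 * c2"])
    fix U W X Y assume h: "inS rho L U W X Y"
    have "cmod (F U W X Y * G U W X Y) = cmod (F U W X Y) * cmod (G U W X Y)" by (simp add: norm_mult)
    also have "\<dots> \<le> (c1 * cmod U powr e1) * (c2 * cmod U powr e2)"
      by (intro mult_mono c1(2)[OF h] c2(2)[OF h]) (use c1 in auto)
    also have "\<dots> = c1 * c2 * cmod U powr (e1 + e2)" by (simp add: powr_add)
    finally show "cmod (F U W X Y * G U W X Y) \<le> c1 * c2 * cmod U powr (e1 + e2)" .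
  qed
qed

lemma bnd_add_gen: assumes "1 \<le> L" "bnd rho L e1 F" "bnd rho L e2 G"
    and "\<And>a b. cmod (H a b) \<le> cmod a + cmod b"
  shows "bnd rho L (max e1 e2) (\<lambda>U W X Y. H (F U W X Y) (G U W X Y))"
proof -
  obtain c1 where c1: "c1 \<ge> 0" "\<And>U W X Y. inS rho L U W X Y \<Longrightarrow> cmod (F U W X Y) \<le> c1 * cmod U powr e1"
    by (rule bndE[OF assms(2)]) blast
  obtain c2 where c2: "c2 \<ge> 0" "\<And>U W X Y. inS rho L U W X Y \<Longrightarrow> cmod (G U W X Y) \<le> c2 * cmod U powr e2"
    by (rule bndE[OF assms(3)]) blast
  show ?thesis
  proof (rule bndI[of _ _ _ "c1 + c2"])
    fix U W X Y assume h: "inS rho L U W X Y"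
    have u1: "1 \<le> cmod U" using h assms(1) by (auto simp: inS_def)
    have p1: "cmod U powr e1 \<le> cmod U powr (max e1 e2)" by (rule powr_mono) (use u1 in auto)
    have p2: "cmod U powr e2 \<le> cmod U powr (max e1 e2)" by (rule powr_mono) (use u1 in auto)
    have "cmod (H (F U W X Y) (G U W X Y)) \<le> cmod (F U W X Y) + cmod (G U W X Y)" by (rule assms(4))
    also have "\<dots> \<le> c1 * cmod U powr e1 + c2 * cmod U powr e2" using c1(2)[OF h] c2(2)[OF h] by linarith
    also have "\<dots> \<le> c1 * cmod U powr (max e1 e2) + c2 * cmod U powr (max e1 e2)"
      by (intro add_mono mult_left_mono p1 p2 c1(1) c2(1))
    finally show "cmod (H (F U W X Y) (G U W X Y)) \<le> (c1 + c2) * cmod U powr (max e1 e2)"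
      by (simp add: algebra_simps)
  qed
qed

lemma bnd_add: "1 \<le> L \<Longrightarrow> bnd rho L e1 F \<Longrightarrow> bnd rho L e2 G \<Longrightarrow>
   bnd rho L (max e1 e2) (\<lambda>U W X Y. F U W X Y + G U W X Y)"
  using bnd_add_gen[of L rho e1 F e2 G "\<lambda>a b. a + b"] norm_triangle_ineq by blast
lemma bnd_diff: "1 \<le> L \<Longrightarrow> bnd rho L e1 F \<Longrightarrow> bnd rho L e2 G \<Longrightarrow>
   bnd rho L (max e1 e2) (\<lambda>U W X Y. F U W X Y - G U W X Y)"
  using bnd_add_gen[of L rho e1 F e2 G "\<lambda>a b. a - b"] norm_triangle_ineq4 by blast

lemma bnd_minus: "bnd rho L e F \<Longrightarrow> bnd rho L e (\<lambda>U W X Y. - F U W X Y)"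
  unfolding bnd_def by simp

lemma bnd_divc: "bnd rho L e F \<Longrightarrow> bnd rho L e (\<lambda>U W X Y. F U W X Y / k)"
proof -
  assume "bnd rho L e F"
  then have "bnd rho L (e + 0) (\<lambda>U W X Y. F U W X Y * inverse k)" by (intro bnd_mult bnd_const)
  then show ?thesis by (simp add: divide_inverse)
qed

lemma bnd_power: "bnd rho L e F \<Longrightarrow> bnd rho L (real n * e) (\<lambda>U W X Y. F U W X Y ^ n)"
proof (induction n)
  case 0
  then show ?case using bnd_const[of rho L 1] by simp
next
  case (Suc n)
  then have "bnd rho L (e + real n * e) (\<lambda>U W X Y. F U W X Y * F U W X Y ^ n)" by (intro bnd_mult) auto
  then show ?case by (simp add: algebra_simps)
qed

lemma bnd_mono: "bnd rho L e F \<Longrightarrow> e \<le> e' \<Longrightarrow> 1 \<le> L \<Longrightarrow> bnd rho L e' F"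
proof -
  assume b: "bnd rho L e F" and e: "e \<le> e'" and L: "1 \<le> L"
  obtain c where c: "c \<ge> 0" "\<And>U W X Y. inS rho L U W X Y \<Longrightarrow> cmod (F U W X Y) \<le> c * cmod U powr e"
    by (rule bndE[OF b]) blast
  show ?thesis
  proof (rule bndI[of _ _ _ c])
    fix U W X Y assume h: "inS rho L U W X Y"
    have u1: "1 \<le> cmod U" using h L by (auto simp: inS_def)
    have "c * cmod U powr e \<le> c * cmod U powr e'" by (intro mult_left_mono powr_mono) (use u1 e c in auto)
    then show "cmod (F U W X Y) \<le> c * cmod U powr e'" using c(2)[OF h] by linarith
  qed
qed

lemma bnd_Lmono: "bnd rho L e F \<Longrightarrow> L \<le> L' \<Longrightarrow> bnd rho L' e F"
  unfolding bnd_def inS_def by (meson order_trans)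


lemmas bnd_rules = bnd_mult bnd_add bnd_diff bnd_minus bnd_divc bnd_power bnd_P bnd_W bnd_X bnd_Y bnd_const

lemma bnd_Jp: "1 \<le> L \<Longrightarrow> bnd rho L (-2) Jp"
  unfolding Jp_def[abs_def]
  apply (rule bnd_mono)
    apply (assumption | rule bnd_rules)+
   apply simp
  apply assumption
  done

lemma bnd_JU: "1 \<le> L \<Longrightarrow> bnd rho L (-3) JU"
  unfolding JU_def[abs_def]
  apply (rule bnd_mono)
    apply (assumption | rule bnd_rules)+
   apply simp
  apply assumption
  done

lemma bnd_JW: "1 \<le> L \<Longrightarrow> bnd rho L (-4/3) JW"
  unfolding JW_def[abs_def]
  apply (rule bnd_mono)
    apply (assumption | rule bnd_rules)+
   apply simp
  apply assumption
  done

lemma bnd_JX: "1 \<le> L \<Longrightarrow> bnd rho L (-2/3) JX"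
  unfolding JX_def[abs_def]
  apply (rule bnd_mono)
    apply (assumption | rule bnd_rules)+
   apply simp
  apply assumption
  done

lemma bnd_JY: "1 \<le> L \<Longrightarrow> bnd rho L (-2/3) JY"
  unfolding JY_def[abs_def]
  apply (rule bnd_mono)
    apply (assumption | rule bnd_rules)+
   apply simp
  apply assumption
  done

lemma bnd_JUW: "1 \<le> L \<Longrightarrow> bnd rho L (-7/3) JUW"
  unfolding JUW_def[abs_def]
  apply (rule bnd_mono)
    apply (assumption | rule bnd_rules)+
   apply simp
  apply assumption
  done

lemma bnd_JUX: "1 \<le> L \<Longrightarrow> bnd rho L (-5/3) JUX"
  unfolding JUX_def[abs_def]
  apply (rule bnd_mono)
    apply (assumption | rule bnd_rules)+
   apply simp
  apply assumption
  done

lemma bnd_JUY: "1 \<le> L \<Longrightarrow> bnd rho L (-5/3) JUY"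
  unfolding JUY_def[abs_def]
  apply (rule bnd_mono)
    apply (assumption | rule bnd_rules)+
   apply simp
  apply assumption
  done

lemma bnd_JWW: "1 \<le> L \<Longrightarrow> bnd rho L (-2/3) JWW"
  unfolding JWW_def[abs_def]
  apply (rule bnd_mono)
    apply (assumption | rule bnd_rules)+
   apply simp
  apply assumption
  done

lemma bnd_JWX: "1 \<le> L \<Longrightarrow> bnd rho L (-1) JWX"
  unfolding JWX_def[abs_def]
  apply (rule bnd_mono)
    apply (assumption | rule bnd_rules)+
   apply simp
  apply assumption
  done

lemma bnd_JXX: "1 \<le> L \<Longrightarrow> bnd rho L (-4/3) JXX"
  unfolding JXX_def[abs_def]
  apply (rule bnd_mono)
    apply (assumption | rule bnd_rules)+
   apply simp
  apply assumption
  done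

lemma bnd_JXY: "1 \<le> L \<Longrightarrow> bnd rho L (-4/3) JXY"
  unfolding JXY_def[abs_def]
  apply (rule bnd_mono)
    apply (assumption | rule bnd_rules)+
   apply simp
  apply assumption
  done


lemma one_plus_ge: "cmod (z::complex) \<le> 1/2 \<Longrightarrow> 1/2 \<le> cmod (1 + z)"
  using norm_diff_ineq[of 1 z] by simp

lemma one_plus_nonpos: "cmod (z::complex) \<le> 1/2 \<Longrightarrow> 1 + z \<notin> \<real>\<^sub>\<le>\<^sub>0"
  using abs_Re_le_cmod[of z] by (auto simp: complex_nonpos_Reals_iff)

lemma bnd_Q: assumes Js: "\<And>U W X Y. inS rho L U W X Y \<Longrightarrow> cmod (Jp U W X Y) \<le> 1/2"
  and s: "s \<in> \<real>" "Re s \<le> 0"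
  shows "bnd rho L 0 (Q s)"
proof (rule bndI[of _ _ _ "(1/2) powr Re s"])
  fix U W X Y assume h: "inS rho L U W X Y"
  have pos: "0 < cmod U" using inS_pos[OF h] .
  have g: "1/2 \<le> cmod (1 + Jp U W X Y)" using one_plus_ge[OF Js[OF h]] .
  have "cmod (Q s U W X Y) = cmod (1 + Jp U W X Y) powr Re s" unfolding Q_def by (rule norm_powr_real_powr'[OF s(1)])
  also have "\<dots> \<le> (1/2) powr Re s" by (rule powr_mono2'[OF s(2)]) (use g in auto)
  finally show "cmod (Q s U W X Y) \<le> (1/2) powr Re s * cmod U powr 0" using pos by simp
qed

lemma bnd_Q1: "(\<And>U W X Y. inS rho L U W X Y \<Longrightarrow> cmod (Jp U W X Y) \<le> 1/2) \<Longrightarrow> bnd rho L 0 (Q (-1/2))"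
  by (rule bnd_Q) auto
lemma bnd_Q3: "(\<And>U W X Y. inS rho L U W X Y \<Longrightarrow> cmod (Jp U W X Y) \<le> 1/2) \<Longrightarrow> bnd rho L 0 (Q (-3/2))"
  by (rule bnd_Q) auto
lemma bnd_Q5: "(\<And>U W X Y. inS rho L U W X Y \<Longrightarrow> cmod (Jp U W X Y) \<le> 1/2) \<Longrightarrow> bnd rho L 0 (Q (-5/2))"
  by (rule bnd_Q) auto

lemma powr_half_bound: assumes "cmod (z::complex) \<le> 1/2"
  shows "cmod ((1 + z) powr (-1/2) - 1) \<le> (1/2 * (1/2) powr (-3/2)) * cmod z"
proof -
  let ?S = "cball (0::complex) (1/2)"
  have der: "((\<lambda>z. (1+z) powr (-1/2)) has_field_derivative (-1/2) * (1+z) powr (-1/2 - 1) * (0 + 1)) (at z within ?S)"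
    if "z \<in> ?S" for z
  proof -
    have "cmod z \<le> 1/2" using that by (simp add: dist_norm)
    then have "1 + z \<notin> \<real>\<^sub>\<le>\<^sub>0" by (rule one_plus_nonpos)
    then show ?thesis by (intro DERIV_chain2[OF has_field_derivative_powr] derivative_intros) auto
  qed
  have bd: "cmod ((-1/2) * (1+z) powr (-1/2 - 1) * (0 + 1)) \<le> 1/2 * (1/2) powr (-3/2)"
    if "z \<in> ?S" for z
  proof -
    have "cmod z \<le> 1/2" using that by (simp add: dist_norm)
    then have g: "1/2 \<le> cmod (1 + z)" by (rule one_plus_ge)
    have "cmod ((-1/2) * (1+z) powr (-1/2 - 1) * (0 + 1)) = 1/2 * cmod (1+z) powr (-3/2)"
      by (simp add: norm_mult norm_powr_real_powr')
    also have "\<dots> \<le> 1/2 * (1/2) powr (-3/2)"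
      by (intro mult_left_mono powr_mono2') (use g in auto)
    finally show ?thesis .
  qed
  have "cmod ((1 + z) powr (-1/2) - (1 + 0) powr (-1/2)) \<le> (1/2 * (1/2) powr (-3/2)) * cmod (z - 0)"
    by (rule field_differentiable_bound[OF convex_cball der bd]) (use assms in \<open>auto simp: dist_norm\<close>)
  then show ?thesis by simp
qed

lemma bnd_Qm: assumes L: "1 \<le> L" and Js: "\<And>U W X Y. inS rho L U W X Y \<Longrightarrow> cmod (Jp U W X Y) \<le> 1/2"
  shows "bnd rho L (-2) (\<lambda>U W X Y. Q (-1/2) U W X Y - 1)"
proof -
  obtain c where c: "c \<ge> 0" "\<And>U W X Y. inS rho L U W X Y \<Longrightarrow> cmod (Jp U W X Y) \<le> c * cmod U powr (-2)"
    by (rule bndE[OF bnd_Jp[OF L]]) blast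
  let ?B = "1/2 * (1/2) powr (-3/2) :: real"
  show ?thesis
  proof (rule bndI[of _ _ _ "?B * c"])
    fix U W X Y assume h: "inS rho L U W X Y"
    have "cmod (Q (-1/2) U W X Y - 1) \<le> ?B * cmod (Jp U W X Y)"
      unfolding Q_def by (rule powr_half_bound[OF Js[OF h]])
    also have "\<dots> \<le> ?B * (c * cmod U powr (-2))" by (intro mult_left_mono c(2)[OF h]) auto
    finally show "cmod (Q (-1/2) U W X Y - 1) \<le> ?B * c * cmod U powr (-2)" by (simp add: mult.assoc)
  qed
qed


context
  fixes rho L :: real
  assumes L: "1 \<le> L" and Js: "\<And>U W X Y. inS rho L U W X Y \<Longrightarrow> cmod (Jp U W X Y) \<le> 1/2"
begin
lemma bnd_Qmc: "bnd rho L (-2) (\<lambda>U W X Y. Q (-1/2) U W X Y - 1)" by (rule bnd_Qm[OF L]) (rule Js)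
lemma bnd_Q1c: "bnd rho L 0 (Q (-1/2))" by (rule bnd_Q1) (rule Js)
lemma bnd_Q3c: "bnd rho L 0 (Q (-3/2))" by (rule bnd_Q3) (rule Js)
lemma bnd_Q5c: "bnd rho L 0 (Q (-5/2))" by (rule bnd_Q5) (rule Js)
lemmas Katoms = bnd_Qmc bnd_Q1c bnd_Q3c bnd_Q5c bnd_Jp[OF L] bnd_JU[OF L] bnd_JW[OF L] bnd_JX[OF L] bnd_JY[OF L] bnd_JUW[OF L] bnd_JUX[OF L] bnd_JUY[OF L] bnd_JWW[OF L] bnd_JWX[OF L] bnd_JXX[OF L] bnd_JXY[OF L]
lemma bnd_KU: "bnd rho L (-11/3) KU"
  unfolding KU_def[abs_def] T2_def
  apply (rule bnd_mono)
    apply (rule Katoms bnd_rules L)+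
   apply simp
  apply (rule L)
  done

lemma bnd_KW: "bnd rho L (-2) KW"
  unfolding KW_def[abs_def] T2_def
  apply (rule bnd_mono)
    apply (rule Katoms bnd_rules L)+
   apply simp
  apply (rule L)
  done

lemma bnd_KX: "bnd rho L (-4/3) KX"
  unfolding KX_def[abs_def] T2_def
  apply (rule bnd_mono)
    apply (rule Katoms bnd_rules L)+
   apply simp
  apply (rule L)
  done

lemma bnd_KY: "bnd rho L (-4/3) KY"
  unfolding KY_def[abs_def] T2_def
  apply (rule bnd_mono)
    apply (rule Katoms bnd_rules L)+
   apply simp
  apply (rule L)
  done

lemma bnd_KUW: "bnd rho L (-3) KUW"
  unfolding KUW_def[abs_def] T2_def
  apply (rule bnd_mono)
    apply (rule Katoms bnd_rules L)+
   apply simp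
  apply (rule L)
  done

lemma bnd_KUX: "bnd rho L (-7/3) KUX"
  unfolding KUX_def[abs_def] T2_def
  apply (rule bnd_mono)
    apply (rule Katoms bnd_rules L)+
   apply simp
  apply (rule L)
  done

lemma bnd_KUY: "bnd rho L (-7/3) KUY"
  unfolding KUY_def[abs_def] T2_def
  apply (rule bnd_mono)
    apply (rule Katoms bnd_rules L)+
   apply simp
  apply (rule L)
  done

lemma bnd_KWW: "bnd rho L (2/3) KWW"
  unfolding KWW_def[abs_def] T2_def
  apply (rule bnd_mono)
    apply (rule Katoms bnd_rules L)+
   apply simp
  apply (rule L)
  done

lemma bnd_KWX: "bnd rho L (-5/3) KWX"
  unfolding KWX_def[abs_def] T2_def
  apply (rule bnd_mono)
    apply (rule Katoms bnd_rules L)+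
   apply simp
  apply (rule L)
  done

lemma bnd_KWY: "bnd rho L (-5/3) KWY"
  unfolding KWY_def[abs_def] T2_def
  apply (rule bnd_mono)
    apply (rule Katoms bnd_rules L)+
   apply simp
  apply (rule L)
  done

lemma bnd_KXW: "bnd rho L (-5/3) KXW"
  unfolding KXW_def[abs_def] T2_def
  apply (rule bnd_mono)
    apply (rule Katoms bnd_rules L)+
   apply simp
  apply (rule L)
  done

lemma bnd_KYW: "bnd rho L (-5/3) KYW"
  unfolding KYW_def[abs_def] T2_def
  apply (rule bnd_mono)
    apply (rule Katoms bnd_rules L)+
   apply simp
  apply (rule L)
  done

lemma bnd_KXX: "bnd rho L (-2) KXX"
  unfolding KXX_def[abs_def] T2_def
  apply (rule bnd_mono)
    apply (rule Katoms bnd_rules L)+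
   apply simp
  apply (rule L)
  done

lemma bnd_KXY: "bnd rho L (-2) KXY"
  unfolding KXY_def[abs_def] T2_def
  apply (rule bnd_mono)
    apply (rule Katoms bnd_rules L)+
   apply simp
  apply (rule L)
  done

lemma bnd_KYX: "bnd rho L (-2) KYX"
  unfolding KYX_def[abs_def] T2_def
  apply (rule bnd_mono)
    apply (rule Katoms bnd_rules L)+
   apply simp
  apply (rule L)
  done

lemma bnd_KYY: "bnd rho L (-2) KYY"
  unfolding KYY_def[abs_def] T2_def
  apply (rule bnd_mono)
    apply (rule Katoms bnd_rules L)+
   apply simp
  apply (rule L)
  done

end


context
  fixes rho L :: real
  assumes L: "1 \<le> L" and Js: "\<And>U W X Y. inS rho L U W X Y \<Longrightarrow> cmod (Jp U W X Y) \<le> 1/2"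
    and Ds: "\<And>U W X Y. inS rho L U W X Y \<Longrightarrow> cmod (KW U W X Y) \<le> 1/2"
begin

lemma bnd_Dn: "bnd rho L 0 Dn"
proof (rule bndI[of _ _ _ 2])
  fix U W X Y assume h: "inS rho L U W X Y"
  have g: "1/2 \<le> cmod (1 + KW U W X Y)" by (rule one_plus_ge[OF Ds[OF h]])
  have "cmod (Dn U W X Y) = inverse (cmod (1 + KW U W X Y))" by (simp add: Dn_def norm_inverse)
  also have "\<dots> \<le> inverse (1/2)" by (rule le_imp_inverse_le[OF g]) simp
  finally have "cmod (Dn U W X Y) \<le> 2" by simp
  then show "cmod (Dn U W X Y) \<le> 2 * cmod U powr 0" using inS_pos[OF h] by simp
qed

lemmas Fatoms = bnd_Dn
lemma "bnd rho L 0 Dn" by (rule Fatoms)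

lemma bnd_KUc: "bnd rho L (-11/3) KU" by (rule bnd_KU[OF L]) (rule Js)
lemma bnd_KWc: "bnd rho L (-2) KW" by (rule bnd_KW[OF L]) (rule Js)
lemma bnd_KXc: "bnd rho L (-4/3) KX" by (rule bnd_KX[OF L]) (rule Js)
lemma bnd_KYc: "bnd rho L (-4/3) KY" by (rule bnd_KY[OF L]) (rule Js)
lemma bnd_KUWc: "bnd rho L (-3) KUW" by (rule bnd_KUW[OF L]) (rule Js)
lemma bnd_KUXc: "bnd rho L (-7/3) KUX" by (rule bnd_KUX[OF L]) (rule Js)
lemma bnd_KUYc: "bnd rho L (-7/3) KUY" by (rule bnd_KUY[OF L]) (rule Js)
lemma bnd_KWWc: "bnd rho L (2/3) KWW" by (rule bnd_KWW[OF L]) (rule Js)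
lemma bnd_KWXc: "bnd rho L (-5/3) KWX" by (rule bnd_KWX[OF L]) (rule Js)
lemma bnd_KWYc: "bnd rho L (-5/3) KWY" by (rule bnd_KWY[OF L]) (rule Js)
lemma bnd_KXWc: "bnd rho L (-5/3) KXW" by (rule bnd_KXW[OF L]) (rule Js)
lemma bnd_KYWc: "bnd rho L (-5/3) KYW" by (rule bnd_KYW[OF L]) (rule Js)
lemma bnd_KXXc: "bnd rho L (-2) KXX" by (rule bnd_KXX[OF L]) (rule Js)
lemma bnd_KXYc: "bnd rho L (-2) KXY" by (rule bnd_KXY[OF L]) (rule Js)
lemma bnd_KYXc: "bnd rho L (-2) KYX" by (rule bnd_KYX[OF L]) (rule Js)
lemma bnd_KYYc: "bnd rho L (-2) KYY" by (rule bnd_KYY[OF L]) (rule Js)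
lemmas Fatoms2 = bnd_KUc bnd_KWc bnd_KXc bnd_KYc bnd_KUWc bnd_KUXc bnd_KUYc bnd_KWWc bnd_KWXc bnd_KWYc bnd_KXWc bnd_KYWc bnd_KXXc bnd_KXYc bnd_KYXc bnd_KYYc

lemma fin_R1: "bnd rho L (-11/3) (\<lambda>U W X Y. - KU U W X Y * Dn U W X Y)"
  apply (rule bnd_mono)
    apply (rule Fatoms Fatoms2 bnd_rules L)+
   apply simp
  apply (rule L)
  done
lemma fin_R2: "bnd rho L (-4/3) (\<lambda>U W X Y. (\<i> * KY U W X Y - KW U W X Y * (\<i> * X)) * Dn U W X Y)"
  apply (rule bnd_mono)
    apply (rule Fatoms Fatoms2 bnd_rules L)+
   apply simp
  apply (rule L)
  done
lemma fin_R3: "bnd rho L (-4/3) (\<lambda>U W X Y. (- \<i> * KX U W X Y - KW U W X Y * (- \<i> * Y)) * Dn U W X Y)"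
  apply (rule bnd_mono)
    apply (rule Fatoms Fatoms2 bnd_rules L)+
   apply simp
  apply (rule L)
  done
lemma fin_dWR1: "bnd rho L (-3) (\<lambda>U W X Y. (- KUW U W X Y) * Dn U W X Y - (- KU U W X Y) * KWW U W X Y * (Dn U W X Y)^2)"
  apply (rule bnd_mono)
    apply (rule Fatoms Fatoms2 bnd_rules L)+
   apply simp
  apply (rule L)
  done
lemma fin_dXR1: "bnd rho L (-7/3) (\<lambda>U W X Y. (- KUX U W X Y) * Dn U W X Y - (- KU U W X Y) * KWX U W X Y * (Dn U W X Y)^2)"
  apply (rule bnd_mono)
    apply (rule Fatoms Fatoms2 bnd_rules L)+
   apply simp
  apply (rule L)
  done
lemma fin_dYR1: "bnd rho L (-7/3) (\<lambda>U W X Y. (- KUY U W X Y) * Dn U W X Y - (- KU U W X Y) * KWY U W X Y * (Dn U W X Y)^2)"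
  apply (rule bnd_mono)
    apply (rule Fatoms Fatoms2 bnd_rules L)+
   apply simp
  apply (rule L)
  done
lemma fin_dWR2: "bnd rho L (-2/3) (\<lambda>U W X Y. (\<i> * KYW U W X Y - KWW U W X Y * (\<i> * X)) * Dn U W X Y - (\<i> * KY U W X Y - KW U W X Y * (\<i> * X)) * KWW U W X Y * (Dn U W X Y)^2)"
  apply (rule bnd_mono)
    apply (rule Fatoms Fatoms2 bnd_rules L)+
   apply simp
  apply (rule L)
  done
lemma fin_dXR2: "bnd rho L (-2) (\<lambda>U W X Y. (\<i> * KYX U W X Y - (KWX U W X Y * (\<i> * X) + KW U W X Y * \<i>)) * Dn U W X Y - (\<i> * KY U W X Y - KW U W X Y * (\<i> * X)) * KWX U W X Y * (Dn U W X Y)^2)"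
  apply (rule bnd_mono)
    apply (rule Fatoms Fatoms2 bnd_rules L)+
   apply simp
  apply (rule L)
  done
lemma fin_dYR2: "bnd rho L (-2) (\<lambda>U W X Y. (\<i> * KYY U W X Y - KWY U W X Y * (\<i> * X)) * Dn U W X Y - (\<i> * KY U W X Y - KW U W X Y * (\<i> * X)) * KWY U W X Y * (Dn U W X Y)^2)"
  apply (rule bnd_mono)
    apply (rule Fatoms Fatoms2 bnd_rules L)+
   apply simp
  apply (rule L)
  done
lemma fin_dWR3: "bnd rho L (-2/3) (\<lambda>U W X Y. (- \<i> * KXW U W X Y - KWW U W X Y * (- \<i> * Y)) * Dn U W X Y - (- \<i> * KX U W X Y - KW U W X Y * (- \<i> * Y)) * KWW U W X Y * (Dn U W X Y)^2)"
  apply (rule bnd_mono)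
    apply (rule Fatoms Fatoms2 bnd_rules L)+
   apply simp
  apply (rule L)
  done
lemma fin_dXR3: "bnd rho L (-2) (\<lambda>U W X Y. (- \<i> * KXX U W X Y - KWX U W X Y * (- \<i> * Y)) * Dn U W X Y - (- \<i> * KX U W X Y - KW U W X Y * (- \<i> * Y)) * KWX U W X Y * (Dn U W X Y)^2)"
  apply (rule bnd_mono)
    apply (rule Fatoms Fatoms2 bnd_rules L)+
   apply simp
  apply (rule L)
  done
lemma fin_dYR3: "bnd rho L (-2) (\<lambda>U W X Y. (- \<i> * KXY U W X Y - (KWY U W X Y * (- \<i> * Y) + KW U W X Y * (- \<i>))) * Dn U W X Y - (- \<i> * KX U W X Y - KW U W X Y * (- \<i> * Y)) * KWY U W X Y * (Dn U W X Y)^2)"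
  apply (rule bnd_mono)
    apply (rule Fatoms Fatoms2 bnd_rules L)+
   apply simp
  apply (rule L)
  done
end

lemma bnd_cong: "bnd rho L e G \<Longrightarrow> (\<And>U W X Y. inS rho L U W X Y \<Longrightarrow> F U W X Y = G U W X Y) \<Longrightarrow> bnd rho L e F"
  unfolding bnd_def by metis

lemma inS_V: assumes "inS rho L U W X Y" "cmod (Jp U W X Y) \<le> 1/2" "cmod (KW U W X Y) \<le> 1/2"
  shows "V U W X Y" "1 + KW U W X Y \<noteq> 0"
proof -
  show "V U W X Y" using assms one_plus_nonpos by (auto simp: V_def inS_def)
  have "1/2 \<le> cmod (1 + KW U W X Y)" by (rule one_plus_ge[OF assms(3)])
  then show "1 + KW U W X Y \<noteq> 0" by auto
qed

lemma stage: assumes L: "1 \<le> L" and Js: "\<And>U W X Y. inS rho L U W X Y \<Longrightarrow> cmod (Jp U W X Y) \<le> 1/2"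
    and Ds: "\<And>U W X Y. inS rho L U W X Y \<Longrightarrow> cmod (KW U W X Y) \<le> 1/2"
  shows "\<exists>C\<ge>0. \<forall>U W X Y. inS rho L U W X Y \<longrightarrow>
      cmod ((R1) U W X Y) \<le> C * cmod U powr (-11/3) \<and>
      cmod ((R2) U W X Y) \<le> C * cmod U powr (-4/3) \<and>
      cmod ((R3) U W X Y) \<le> C * cmod U powr (-4/3) \<and>
      cmod ((dW R1) U W X Y) \<le> C * cmod U powr (-3) \<and>
      cmod ((dX R1) U W X Y) \<le> C * cmod U powr (-7/3) \<and>
      cmod ((dY R1) U W X Y) \<le> C * cmod U powr (-7/3) \<and>
      cmod ((dW R2) U W X Y) \<le> C * cmod U powr (-2/3) \<and>
      cmod ((dX R2) U W X Y) \<le> C * cmod U powr (-2) \<and>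
      cmod ((dY R2) U W X Y) \<le> C * cmod U powr (-2) \<and>
      cmod ((dW R3) U W X Y) \<le> C * cmod U powr (-2/3) \<and>
      cmod ((dX R3) U W X Y) \<le> C * cmod U powr (-2) \<and>
      cmod ((dY R3) U W X Y) \<le> C * cmod U powr (-2)"
proof -
  have pt: "V U W X Y" "1 + KW U W X Y \<noteq> 0" if "inS rho L U W X Y" for U W X Y
    using inS_V[OF that Js[OF that] Ds[OF that]] by auto
  have "bnd rho L (-11/3) (R1)"
  proof (rule bnd_cong)
    show "bnd rho L (-11/3) (\<lambda>U W X Y. - KU U W X Y * Dn U W X Y)"
      by (rule fin_R1) (rule L | (rule Js, assumption) | (rule Ds, assumption))+
    fix U W X Y assume h: "inS rho L U W X Y"
    show "(R1) U W X Y = - KU U W X Y * Dn U W X Y" by (rule R1_eq[OF pt(1)[OF h]])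
  qed
  then obtain c0 where c0: "c0 \<ge> 0" "\<And>U W X Y. inS rho L U W X Y \<Longrightarrow> cmod ((R1) U W X Y) \<le> c0 * cmod U powr (-11/3)"
    by (rule bndE) blast
  have "bnd rho L (-4/3) (R2)"
  proof (rule bnd_cong)
    show "bnd rho L (-4/3) (\<lambda>U W X Y. (\<i> * KY U W X Y - KW U W X Y * (\<i> * X)) * Dn U W X Y)"
      by (rule fin_R2) (rule L | (rule Js, assumption) | (rule Ds, assumption))+
    fix U W X Y assume h: "inS rho L U W X Y"
    show "(R2) U W X Y = (\<i> * KY U W X Y - KW U W X Y * (\<i> * X)) * Dn U W X Y" by (rule R2_eq[OF pt(1)[OF h]])
  qed
  then obtain c1 where c1: "c1 \<ge> 0" "\<And>U W X Y. inS rho L U W X Y \<Longrightarrow> cmod ((R2) U W X Y) \<le> c1 * cmod U powr (-4/3)"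
    by (rule bndE) blast
  have "bnd rho L (-4/3) (R3)"
  proof (rule bnd_cong)
    show "bnd rho L (-4/3) (\<lambda>U W X Y. (- \<i> * KX U W X Y - KW U W X Y * (- \<i> * Y)) * Dn U W X Y)"
      by (rule fin_R3) (rule L | (rule Js, assumption) | (rule Ds, assumption))+
    fix U W X Y assume h: "inS rho L U W X Y"
    show "(R3) U W X Y = (- \<i> * KX U W X Y - KW U W X Y * (- \<i> * Y)) * Dn U W X Y" by (rule R3_eq[OF pt(1)[OF h]])
  qed
  then obtain c2 where c2: "c2 \<ge> 0" "\<And>U W X Y. inS rho L U W X Y \<Longrightarrow> cmod ((R3) U W X Y) \<le> c2 * cmod U powr (-4/3)"
    by (rule bndE) blast
  have "bnd rho L (-3) (dW R1)"
  proof (rule bnd_cong)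
    show "bnd rho L (-3) (\<lambda>U W X Y. (- KUW U W X Y) * Dn U W X Y - (- KU U W X Y) * KWW U W X Y * (Dn U W X Y)^2)"
      by (rule fin_dWR1) (rule L | (rule Js, assumption) | (rule Ds, assumption))+
    fix U W X Y assume h: "inS rho L U W X Y"
    show "(dW R1) U W X Y = (- KUW U W X Y) * Dn U W X Y - (- KU U W X Y) * KWW U W X Y * (Dn U W X Y)^2" by (rule dWR1_eq[OF pt(1)[OF h] pt(2)[OF h]])
  qed
  then obtain c3 where c3: "c3 \<ge> 0" "\<And>U W X Y. inS rho L U W X Y \<Longrightarrow> cmod ((dW R1) U W X Y) \<le> c3 * cmod U powr (-3)"
    by (rule bndE) blast
  have "bnd rho L (-7/3) (dX R1)"
  proof (rule bnd_cong)
    show "bnd rho L (-7/3) (\<lambda>U W X Y. (- KUX U W X Y) * Dn U W X Y - (- KU U W X Y) * KWX U W X Y * (Dn U W X Y)^2)"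
      by (rule fin_dXR1) (rule L | (rule Js, assumption) | (rule Ds, assumption))+
    fix U W X Y assume h: "inS rho L U W X Y"
    show "(dX R1) U W X Y = (- KUX U W X Y) * Dn U W X Y - (- KU U W X Y) * KWX U W X Y * (Dn U W X Y)^2" by (rule dXR1_eq[OF pt(1)[OF h] pt(2)[OF h]])
  qed
  then obtain c4 where c4: "c4 \<ge> 0" "\<And>U W X Y. inS rho L U W X Y \<Longrightarrow> cmod ((dX R1) U W X Y) \<le> c4 * cmod U powr (-7/3)"
    by (rule bndE) blast
  have "bnd rho L (-7/3) (dY R1)"
  proof (rule bnd_cong)
    show "bnd rho L (-7/3) (\<lambda>U W X Y. (- KUY U W X Y) * Dn U W X Y - (- KU U W X Y) * KWY U W X Y * (Dn U W X Y)^2)"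
      by (rule fin_dYR1) (rule L | (rule Js, assumption) | (rule Ds, assumption))+
    fix U W X Y assume h: "inS rho L U W X Y"
    show "(dY R1) U W X Y = (- KUY U W X Y) * Dn U W X Y - (- KU U W X Y) * KWY U W X Y * (Dn U W X Y)^2" by (rule dYR1_eq[OF pt(1)[OF h] pt(2)[OF h]])
  qed
  then obtain c5 where c5: "c5 \<ge> 0" "\<And>U W X Y. inS rho L U W X Y \<Longrightarrow> cmod ((dY R1) U W X Y) \<le> c5 * cmod U powr (-7/3)"
    by (rule bndE) blast
  have "bnd rho L (-2/3) (dW R2)"
  proof (rule bnd_cong)
    show "bnd rho L (-2/3) (\<lambda>U W X Y. (\<i> * KYW U W X Y - KWW U W X Y * (\<i> * X)) * Dn U W X Y - (\<i> * KY U W X Y - KW U W X Y * (\<i> * X)) * KWW U W X Y * (Dn U W X Y)^2)"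
      by (rule fin_dWR2) (rule L | (rule Js, assumption) | (rule Ds, assumption))+
    fix U W X Y assume h: "inS rho L U W X Y"
    show "(dW R2) U W X Y = (\<i> * KYW U W X Y - KWW U W X Y * (\<i> * X)) * Dn U W X Y - (\<i> * KY U W X Y - KW U W X Y * (\<i> * X)) * KWW U W X Y * (Dn U W X Y)^2" by (rule dWR2_eq[OF pt(1)[OF h] pt(2)[OF h]])
  qed
  then obtain c6 where c6: "c6 \<ge> 0" "\<And>U W X Y. inS rho L U W X Y \<Longrightarrow> cmod ((dW R2) U W X Y) \<le> c6 * cmod U powr (-2/3)"
    by (rule bndE) blast
  have "bnd rho L (-2) (dX R2)"
  proof (rule bnd_cong)
    show "bnd rho L (-2) (\<lambda>U W X Y. (\<i> * KYX U W X Y - (KWX U W X Y * (\<i> * X) + KW U W X Y * \<i>)) * Dn U W X Y - (\<i> * KY U W X Y - KW U W X Y * (\<i> * X)) * KWX U W X Y * (Dn U W X Y)^2)"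
      by (rule fin_dXR2) (rule L | (rule Js, assumption) | (rule Ds, assumption))+
    fix U W X Y assume h: "inS rho L U W X Y"
    show "(dX R2) U W X Y = (\<i> * KYX U W X Y - (KWX U W X Y * (\<i> * X) + KW U W X Y * \<i>)) * Dn U W X Y - (\<i> * KY U W X Y - KW U W X Y * (\<i> * X)) * KWX U W X Y * (Dn U W X Y)^2" by (rule dXR2_eq[OF pt(1)[OF h] pt(2)[OF h]])
  qed
  then obtain c7 where c7: "c7 \<ge> 0" "\<And>U W X Y. inS rho L U W X Y \<Longrightarrow> cmod ((dX R2) U W X Y) \<le> c7 * cmod U powr (-2)"
    by (rule bndE) blast
  have "bnd rho L (-2) (dY R2)"
  proof (rule bnd_cong)
    show "bnd rho L (-2) (\<lambda>U W X Y. (\<i> * KYY U W X Y - KWY U W X Y * (\<i> * X)) * Dn U W X Y - (\<i> * KY U W X Y - KW U W X Y * (\<i> * X)) * KWY U W X Y * (Dn U W X Y)^2)"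
      by (rule fin_dYR2) (rule L | (rule Js, assumption) | (rule Ds, assumption))+
    fix U W X Y assume h: "inS rho L U W X Y"
    show "(dY R2) U W X Y = (\<i> * KYY U W X Y - KWY U W X Y * (\<i> * X)) * Dn U W X Y - (\<i> * KY U W X Y - KW U W X Y * (\<i> * X)) * KWY U W X Y * (Dn U W X Y)^2" by (rule dYR2_eq[OF pt(1)[OF h] pt(2)[OF h]])
  qed
  then obtain c8 where c8: "c8 \<ge> 0" "\<And>U W X Y. inS rho L U W X Y \<Longrightarrow> cmod ((dY R2) U W X Y) \<le> c8 * cmod U powr (-2)"
    by (rule bndE) blast
  have "bnd rho L (-2/3) (dW R3)"
  proof (rule bnd_cong)
    show "bnd rho L (-2/3) (\<lambda>U W X Y. (- \<i> * KXW U W X Y - KWW U W X Y * (- \<i> * Y)) * Dn U W X Y - (- \<i> * KX U W X Y - KW U W X Y * (- \<i> * Y)) * KWW U W X Y * (Dn U W X Y)^2)"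
      by (rule fin_dWR3) (rule L | (rule Js, assumption) | (rule Ds, assumption))+
    fix U W X Y assume h: "inS rho L U W X Y"
    show "(dW R3) U W X Y = (- \<i> * KXW U W X Y - KWW U W X Y * (- \<i> * Y)) * Dn U W X Y - (- \<i> * KX U W X Y - KW U W X Y * (- \<i> * Y)) * KWW U W X Y * (Dn U W X Y)^2" by (rule dWR3_eq[OF pt(1)[OF h] pt(2)[OF h]])
  qed
  then obtain c9 where c9: "c9 \<ge> 0" "\<And>U W X Y. inS rho L U W X Y \<Longrightarrow> cmod ((dW R3) U W X Y) \<le> c9 * cmod U powr (-2/3)"
    by (rule bndE) blast
  have "bnd rho L (-2) (dX R3)"
  proof (rule bnd_cong)
    show "bnd rho L (-2) (\<lambda>U W X Y. (- \<i> * KXX U W X Y - KWX U W X Y * (- \<i> * Y)) * Dn U W X Y - (- \<i> * KX U W X Y - KW U W X Y * (- \<i> * Y)) * KWX U W X Y * (Dn U W X Y)^2)"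
      by (rule fin_dXR3) (rule L | (rule Js, assumption) | (rule Ds, assumption))+
    fix U W X Y assume h: "inS rho L U W X Y"
    show "(dX R3) U W X Y = (- \<i> * KXX U W X Y - KWX U W X Y * (- \<i> * Y)) * Dn U W X Y - (- \<i> * KX U W X Y - KW U W X Y * (- \<i> * Y)) * KWX U W X Y * (Dn U W X Y)^2" by (rule dXR3_eq[OF pt(1)[OF h] pt(2)[OF h]])
  qed
  then obtain c10 where c10: "c10 \<ge> 0" "\<And>U W X Y. inS rho L U W X Y \<Longrightarrow> cmod ((dX R3) U W X Y) \<le> c10 * cmod U powr (-2)"
    by (rule bndE) blast
  have "bnd rho L (-2) (dY R3)"
  proof (rule bnd_cong)
    show "bnd rho L (-2) (\<lambda>U W X Y. (- \<i> * KXY U W X Y - (KWY U W X Y * (- \<i> * Y) + KW U W X Y * (- \<i>))) * Dn U W X Y - (- \<i> * KX U W X Y - KW U W X Y * (- \<i> * Y)) * KWY U W X Y * (Dn U W X Y)^2)"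
      by (rule fin_dYR3) (rule L | (rule Js, assumption) | (rule Ds, assumption))+
    fix U W X Y assume h: "inS rho L U W X Y"
    show "(dY R3) U W X Y = (- \<i> * KXY U W X Y - (KWY U W X Y * (- \<i> * Y) + KW U W X Y * (- \<i>))) * Dn U W X Y - (- \<i> * KX U W X Y - KW U W X Y * (- \<i> * Y)) * KWY U W X Y * (Dn U W X Y)^2" by (rule dYR3_eq[OF pt(1)[OF h] pt(2)[OF h]])
  qed
  then obtain c11 where c11: "c11 \<ge> 0" "\<And>U W X Y. inS rho L U W X Y \<Longrightarrow> cmod ((dY R3) U W X Y) \<le> c11 * cmod U powr (-2)"
    by (rule bndE) blast
  define C where "C = c0+c1+c2+c3+c4+c5+c6+c7+c8+c9+c10+c11"
  have C: "C \<ge> 0" "c0 \<le> C" "c1 \<le> C" "c2 \<le> C" "c3 \<le> C" "c4 \<le> C" "c5 \<le> C" "c6 \<le> C" "c7 \<le> C" "c8 \<le> C" "c9 \<le> C" "c10 \<le> C" "c11 \<le> C"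
    unfolding C_def using c0(1) c1(1) c2(1) c3(1) c4(1) c5(1) c6(1) c7(1) c8(1) c9(1) c10(1) c11(1) by linarith+
  show ?thesis
  proof (intro exI[of _ C] conjI allI impI C(1))
    fix U W X Y assume h: "inS rho L U W X Y"
    have up: "cmod U powr e \<ge> 0" for e by simp
    show "cmod ((R1) U W X Y) \<le> C * cmod U powr (-11/3)"
      using c0(2)[OF h] mult_right_mono[OF C(2) up[of "-11/3"]] by linarith
    show "cmod ((R2) U W X Y) \<le> C * cmod U powr (-4/3)"
      using c1(2)[OF h] mult_right_mono[OF C(3) up[of "-4/3"]] by linarith
    show "cmod ((R3) U W X Y) \<le> C * cmod U powr (-4/3)"
      using c2(2)[OF h] mult_right_mono[OF C(4) up[of "-4/3"]] by linarith
    show "cmod ((dW R1) U W X Y) \<le> C * cmod U powr (-3)"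
      using c3(2)[OF h] mult_right_mono[OF C(5) up[of "-3"]] by linarith
    show "cmod ((dX R1) U W X Y) \<le> C * cmod U powr (-7/3)"
      using c4(2)[OF h] mult_right_mono[OF C(6) up[of "-7/3"]] by linarith
    show "cmod ((dY R1) U W X Y) \<le> C * cmod U powr (-7/3)"
      using c5(2)[OF h] mult_right_mono[OF C(7) up[of "-7/3"]] by linarith
    show "cmod ((dW R2) U W X Y) \<le> C * cmod U powr (-2/3)"
      using c6(2)[OF h] mult_right_mono[OF C(8) up[of "-2/3"]] by linarith
    show "cmod ((dX R2) U W X Y) \<le> C * cmod U powr (-2)"
      using c7(2)[OF h] mult_right_mono[OF C(9) up[of "-2"]] by linarith
    show "cmod ((dY R2) U W X Y) \<le> C * cmod U powr (-2)"
      using c8(2)[OF h] mult_right_mono[OF C(10) up[of "-2"]] by linarith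
    show "cmod ((dW R3) U W X Y) \<le> C * cmod U powr (-2/3)"
      using c9(2)[OF h] mult_right_mono[OF C(11) up[of "-2/3"]] by linarith
    show "cmod ((dX R3) U W X Y) \<le> C * cmod U powr (-2)"
      using c10(2)[OF h] mult_right_mono[OF C(12) up[of "-2"]] by linarith
    show "cmod ((dY R3) U W X Y) \<le> C * cmod U powr (-2)"
      using c11(2)[OF h] mult_right_mono[OF C(13) up[of "-2"]] by linarith
  qed
qed

lemma inS_mono: "inS rho L U W X Y \<Longrightarrow> L' \<le> L \<Longrightarrow> inS rho L' U W X Y"
  by (auto simp: inS_def)

lemma ereal3: assumes "(a::ereal) + b + c \<le> r" "0 \<le> a" "0 \<le> b" "0 \<le> c"
  shows "a \<le> r" "b \<le> r" "c \<le> r"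
proof -
  have "a \<le> a + b + c" using assms by (simp add: add_increasing2 add_nonneg_nonneg)
  then show "a \<le> r" using assms(1) by (rule order_trans)
  have "b \<le> b + (a + c)" using assms by (simp add: add_increasing2 add_nonneg_nonneg)
  also have "\<dots> = a + b + c" by (simp add: ac_simps)
  finally show "b \<le> r" using assms(1) by (rule order_trans)
  have "c \<le> c + (a + b)" using assms by (simp add: add_increasing2 add_nonneg_nonneg)
  also have "\<dots> = a + b + c" by (simp add: ac_simps)
  finally show "c \<le> r" using assms(1) by (rule order_trans)
qed
lemma small: fixes c u :: real assumes c: "c \<ge> 0" and u: "1 + 2*c \<le> u" shows "c * u powr (-2) \<le> 1/2"
proof -
  have u1: "1 \<le> u" using u c by linarith
  have "u * 1 \<le> u * u" by (rule mult_left_mono) (use u1 in auto)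
  then have uu: "2 * c \<le> u^2" using u by (simp add: power2_eq_square)
  have e: "u powr (-2) = 1 / u^2" using u1 by (simp add: powr_minus_divide powr_numeral)
  have "c * u powr (-2) = c / u^2" unfolding e by simp
  also have "\<dots> \<le> 1/2" using uu u1 by (simp add: divide_le_eq)
  finally show ?thesis .
qed

lemma Dk_props: assumes b: "0 < beta0" "beta0 < pi/2" and L: "1 \<le> L"
  and k: "2*L*(1 + tan beta0) \<le> kappa" and U: "U \<in> Dk beta0 kappa"
  shows "good U" "L \<le> cmod U"
proof -
  define t where "t = tan beta0"
  have t: "0 < t" unfolding t_def using b by (simp add: tan_gt_zero)
  have Lt: "0 \<le> L * t" using t L by simp
  have k2: "2*L + 2*(L*t) \<le> kappa" using k unfolding t_def by (simp add: algebra_simps)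
  have D: "\<bar>Im U\<bar> \<ge> t * Re U + kappa" using U unfolding Dk_def t_def by simp
  show "good U"
  proof (unfold good_def, intro impI)
    assume "Im U = 0"
    then have "t * Re U < 0" using D k2 L Lt by linarith
    then show "Re U < 0" using t by (simp add: mult_less_0_iff)
  qed
  show "L \<le> cmod U"
  proof (cases "t * Re U \<ge> - kappa / 2")
    case True
    then have "\<bar>Im U\<bar> \<ge> L" using D k2 Lt by linarith
    then show ?thesis using abs_Im_le_cmod[of U] by linarith
  next
    case False
    have "t * (- Re U - L) > 0" using k2 Lt L False by (simp add: algebra_simps; linarith)
    then have "- Re U - L > 0" using t by (simp add: zero_less_mult_iff)
    then show ?thesis using abs_Re_le_cmod[of U] by linarith
  qed
qed

lemma wn_pt: assumes "U \<in> Dk b k" "wnorm b k nu F \<le> ereal r" "U \<noteq> 0"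
  shows "cmod (F U) \<le> r * cmod U powr (-nu)"
proof -
  have "ereal (cmod U powr nu * cmod (F U)) \<le> wnorm b k nu F"
    unfolding wnorm_def by (rule SUP_upper) fact
  then have a: "cmod U powr nu * cmod (F U) \<le> r" using assms(2) by (meson ereal_less_eq(3) order_trans)
  have "cmod (F U) = cmod U powr (-nu) * (cmod U powr nu * cmod (F U))"
    using assms(3) by (simp add: powr_add[symmetric])
  also have "\<dots> \<le> cmod U powr (-nu) * r" by (rule mult_left_mono[OF a]) simp
  finally show ?thesis by (simp add: mult.commute)
qed

lemma wn_nonneg: "U \<in> Dk b k \<Longrightarrow> 0 \<le> wnorm b k nu F"
proof -
  assume "U \<in> Dk b k"
  then have "ereal (cmod U powr nu * cmod (F U)) \<le> wnorm b k nu F"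
    unfolding wnorm_def by (rule SUP_upper)
  moreover have "0 \<le> ereal (cmod U powr nu * cmod (F U))" by simp
  ultimately show ?thesis by (rule order_trans[rotated])
qed

lemma wn_le: assumes "\<And>U. U \<in> Dk b k \<Longrightarrow> cmod (G U) \<le> C * cmod U powr e"
  "\<And>U. U \<in> Dk b k \<Longrightarrow> U \<noteq> 0" "e = - nu" "C \<le> C'"
  shows "wnorm b k nu G \<le> ereal C'"
  unfolding wnorm_def
proof (rule SUP_least)
  fix U assume U: "U \<in> Dk b k"
  have nz: "U \<noteq> 0" using assms(2)[OF U] .
  have "cmod U powr nu * cmod (G U) \<le> cmod U powr nu * (C * cmod U powr e)"
    by (rule mult_left_mono[OF assms(1)[OF U]]) simp
  also have "\<dots> = C" using nz assms(3) by (simp add: powr_add[symmetric])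
  finally show "ereal (cmod U powr nu * cmod (G U)) \<le> ereal C'" using assms(4) by simp
qed

theorem lemma5p5:
  fixes beta0 rho :: real
  assumes "0 < beta0" and "beta0 < pi / 2" and "0 < rho"
  shows "\<exists>kappa0 > 0. \<exists>C > 0. \<forall>kappa \<ge> kappa0. \<forall>W X Y.
    inBall beta0 kappa rho W X Y \<longrightarrow>
      wnorm beta0 kappa (11/3) (\<lambda>U. R1 U (W U) (X U) (Y U)) \<le> ereal C \<and>
      wnorm beta0 kappa (4/3) (\<lambda>U. R2 U (W U) (X U) (Y U)) \<le> ereal C \<and>
      wnorm beta0 kappa (4/3) (\<lambda>U. R3 U (W U) (X U) (Y U)) \<le> ereal C \<and>
      wnorm beta0 kappa 3 (\<lambda>U. dW R1 U (W U) (X U) (Y U)) \<le> ereal C \<and>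
      wnorm beta0 kappa (7/3) (\<lambda>U. dX R1 U (W U) (X U) (Y U)) \<le> ereal C \<and>
      wnorm beta0 kappa (7/3) (\<lambda>U. dY R1 U (W U) (X U) (Y U)) \<le> ereal C \<and>
      wnorm beta0 kappa (2/3) (\<lambda>U. dW R2 U (W U) (X U) (Y U)) \<le> ereal C \<and>
      wnorm beta0 kappa 2 (\<lambda>U. dX R2 U (W U) (X U) (Y U)) \<le> ereal C \<and>
      wnorm beta0 kappa 2 (\<lambda>U. dY R2 U (W U) (X U) (Y U)) \<le> ereal C \<and>
      wnorm beta0 kappa (2/3) (\<lambda>U. dW R3 U (W U) (X U) (Y U)) \<le> ereal C \<and>
      wnorm beta0 kappa 2 (\<lambda>U. dX R3 U (W U) (X U) (Y U)) \<le> ereal C \<and>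
      wnorm beta0 kappa 2 (\<lambda>U. dY R3 U (W U) (X U) (Y U)) \<le> ereal C"
  proof -
  have "bnd rho 1 (-2) Jp" by (rule bnd_Jp) simp
  then obtain cJ where cJ: "cJ \<ge> 0" "\<And>U W X Y. inS rho 1 U W X Y \<Longrightarrow> cmod (Jp U W X Y) \<le> cJ * cmod U powr (-2)"
    by (rule bndE) blast
  define L1 where "L1 = 1 + 2 * cJ"
  have L1: "1 \<le> L1" using cJ(1) by (simp add: L1_def)
  have Js1: "cmod (Jp U W X Y) \<le> 1/2" if h: "inS rho L1 U W X Y" for U W X Y
  proof -
    have "inS rho 1 U W X Y" by (rule inS_mono[OF h L1])
    then have "cmod (Jp U W X Y) \<le> cJ * cmod U powr (-2)" by (rule cJ(2))
    also have "\<dots> \<le> 1/2" by (rule small[OF cJ(1)]) (use h in \<open>simp add: inS_def L1_def\<close>)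
    finally show ?thesis .
  qed
  have "bnd rho L1 (-2) KW" by (rule bnd_KW) (rule L1 | (rule Js1, assumption))+
  then obtain cW where cW: "cW \<ge> 0" "\<And>U W X Y. inS rho L1 U W X Y \<Longrightarrow> cmod (KW U W X Y) \<le> cW * cmod U powr (-2)"
    by (rule bndE) blast
  define L2 where "L2 = L1 + 2 * cW"
  have L2: "1 \<le> L2" "L1 \<le> L2" using cW(1) L1 by (simp_all add: L2_def)
  have Js2: "cmod (Jp U W X Y) \<le> 1/2" if h: "inS rho L2 U W X Y" for U W X Y
    by (rule Js1[OF inS_mono[OF h L2(2)]])
  have Ds2: "cmod (KW U W X Y) \<le> 1/2" if h: "inS rho L2 U W X Y" for U W X Y
  proof -
    have "inS rho L1 U W X Y" by (rule inS_mono[OF h L2(2)])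
    then have "cmod (KW U W X Y) \<le> cW * cmod U powr (-2)" by (rule cW(2))
    also have "\<dots> \<le> 1/2" by (rule small[OF cW(1)]) (use h L1 in \<open>simp add: inS_def L2_def\<close>)
    finally show ?thesis .
  qed
  have "\<exists>C\<ge>0. \<forall>U W X Y. inS rho L2 U W X Y \<longrightarrow>
      cmod ((R1) U W X Y) \<le> C * cmod U powr (-11/3) \<and>
      cmod ((R2) U W X Y) \<le> C * cmod U powr (-4/3) \<and>
      cmod ((R3) U W X Y) \<le> C * cmod U powr (-4/3) \<and>
      cmod ((dW R1) U W X Y) \<le> C * cmod U powr (-3) \<and>
      cmod ((dX R1) U W X Y) \<le> C * cmod U powr (-7/3) \<and>
      cmod ((dY R1) U W X Y) \<le> C * cmod U powr (-7/3) \<and>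
      cmod ((dW R2) U W X Y) \<le> C * cmod U powr (-2/3) \<and>
      cmod ((dX R2) U W X Y) \<le> C * cmod U powr (-2) \<and>
      cmod ((dY R2) U W X Y) \<le> C * cmod U powr (-2) \<and>
      cmod ((dW R3) U W X Y) \<le> C * cmod U powr (-2/3) \<and>
      cmod ((dX R3) U W X Y) \<le> C * cmod U powr (-2) \<and>
      cmod ((dY R3) U W X Y) \<le> C * cmod U powr (-2)"
    by (rule stage) (rule L2(1) | (rule Js2, assumption) | (rule Ds2, assumption))+
  then obtain C where C: "C \<ge> 0" "\<And>U W X Y. inS rho L2 U W X Y \<Longrightarrow>
      cmod ((R1) U W X Y) \<le> C * cmod U powr (-11/3) \<and>
      cmod ((R2) U W X Y) \<le> C * cmod U powr (-4/3) \<and>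
      cmod ((R3) U W X Y) \<le> C * cmod U powr (-4/3) \<and>
      cmod ((dW R1) U W X Y) \<le> C * cmod U powr (-3) \<and>
      cmod ((dX R1) U W X Y) \<le> C * cmod U powr (-7/3) \<and>
      cmod ((dY R1) U W X Y) \<le> C * cmod U powr (-7/3) \<and>
      cmod ((dW R2) U W X Y) \<le> C * cmod U powr (-2/3) \<and>
      cmod ((dX R2) U W X Y) \<le> C * cmod U powr (-2) \<and>
      cmod ((dY R2) U W X Y) \<le> C * cmod U powr (-2) \<and>
      cmod ((dW R3) U W X Y) \<le> C * cmod U powr (-2/3) \<and>
      cmod ((dX R3) U W X Y) \<le> C * cmod U powr (-2) \<and>
      cmod ((dY R3) U W X Y) \<le> C * cmod U powr (-2)"
    by blast
  define kappa0 where "kappa0 = 2 * L2 * (1 + tan beta0)"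
  have t: "0 < tan beta0" using assms by (simp add: tan_gt_zero)
  have k0: "kappa0 > 0" unfolding kappa0_def using L2 t by simp
  have C1: "0 < C + 1" using C(1) by simp
  show ?thesis
  proof (rule exI[of _ kappa0], rule conjI[OF k0], rule exI[of _ "C + 1"], rule conjI[OF C1], intro allI impI)
    fix kappa W X Y
    assume k: "kappa0 \<le> kappa" and B: "inBall beta0 kappa rho W X Y"
    have DU: "good U" "L2 \<le> cmod U" if "U \<in> Dk beta0 kappa" for U
      using Dk_props[OF assms(1,2) L2(1) _ that] k unfolding kappa0_def by auto
    have nz: "U \<noteq> 0" if "U \<in> Dk beta0 kappa" for U using DU(1)[OF that] good_nz by blast
    have sum: "wnorm beta0 kappa (8/3) W + wnorm beta0 kappa (4/3) X + wnorm beta0 kappa (4/3) Y \<le> ereal rho"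
      using B by (simp add: inBall_def)
    have inS: "inS rho L2 U (W U) (X U) (Y U)" if U: "U \<in> Dk beta0 kappa" for U
    proof -
      have n1: "0 \<le> wnorm beta0 kappa (8/3) W" "0 \<le> wnorm beta0 kappa (4/3) X" "0 \<le> wnorm beta0 kappa (4/3) Y"
        using wn_nonneg[OF U] by auto
      note e3 = ereal3[OF sum n1]
      show ?thesis
        using wn_pt[OF U e3(1) nz[OF U]] wn_pt[OF U e3(2) nz[OF U]]
          wn_pt[OF U e3(3) nz[OF U]] DU[OF U]
        by (auto simp: inS_def)
    qed
    have CC: "C \<le> C + 1" by simp
    have g0: "wnorm beta0 kappa (11/3) (\<lambda>U. (R1) U (W U) (X U) (Y U)) \<le> ereal (C + 1)"
      by (rule wn_le[where e="-11/3" and C=C]) (use C(2)[OF inS] nz in auto)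
    have g1: "wnorm beta0 kappa (4/3) (\<lambda>U. (R2) U (W U) (X U) (Y U)) \<le> ereal (C + 1)"
      by (rule wn_le[where e="-4/3" and C=C]) (use C(2)[OF inS] nz in auto)
    have g2: "wnorm beta0 kappa (4/3) (\<lambda>U. (R3) U (W U) (X U) (Y U)) \<le> ereal (C + 1)"
      by (rule wn_le[where e="-4/3" and C=C]) (use C(2)[OF inS] nz in auto)
    have g3: "wnorm beta0 kappa (3) (\<lambda>U. (dW R1) U (W U) (X U) (Y U)) \<le> ereal (C + 1)"
      by (rule wn_le[where e="-3" and C=C]) (use C(2)[OF inS] nz in auto)
    have g4: "wnorm beta0 kappa (7/3) (\<lambda>U. (dX R1) U (W U) (X U) (Y U)) \<le> ereal (C + 1)"
      by (rule wn_le[where e="-7/3" and C=C]) (use C(2)[OF inS] nz in auto)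
    have g5: "wnorm beta0 kappa (7/3) (\<lambda>U. (dY R1) U (W U) (X U) (Y U)) \<le> ereal (C + 1)"
      by (rule wn_le[where e="-7/3" and C=C]) (use C(2)[OF inS] nz in auto)
    have g6: "wnorm beta0 kappa (2/3) (\<lambda>U. (dW R2) U (W U) (X U) (Y U)) \<le> ereal (C + 1)"
      by (rule wn_le[where e="-2/3" and C=C]) (use C(2)[OF inS] nz in auto)
    have g7: "wnorm beta0 kappa (2) (\<lambda>U. (dX R2) U (W U) (X U) (Y U)) \<le> ereal (C + 1)"
      by (rule wn_le[where e="-2" and C=C]) (use C(2)[OF inS] nz in auto)
    have g8: "wnorm beta0 kappa (2) (\<lambda>U. (dY R2) U (W U) (X U) (Y U)) \<le> ereal (C + 1)"
      by (rule wn_le[where e="-2" and C=C]) (use C(2)[OF inS] nz in auto)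
    have g9: "wnorm beta0 kappa (2/3) (\<lambda>U. (dW R3) U (W U) (X U) (Y U)) \<le> ereal (C + 1)"
      by (rule wn_le[where e="-2/3" and C=C]) (use C(2)[OF inS] nz in auto)
    have g10: "wnorm beta0 kappa (2) (\<lambda>U. (dX R3) U (W U) (X U) (Y U)) \<le> ereal (C + 1)"
      by (rule wn_le[where e="-2" and C=C]) (use C(2)[OF inS] nz in auto)
    have g11: "wnorm beta0 kappa (2) (\<lambda>U. (dY R3) U (W U) (X U) (Y U)) \<le> ereal (C + 1)"
      by (rule wn_le[where e="-2" and C=C]) (use C(2)[OF inS] nz in auto)
    show "wnorm beta0 kappa (11/3) (\<lambda>U. R1 U (W U) (X U) (Y U)) \<le> ereal (C + 1) \<and>
      wnorm beta0 kappa (4/3) (\<lambda>U. R2 U (W U) (X U) (Y U)) \<le> ereal (C + 1) \<and>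
      wnorm beta0 kappa (4/3) (\<lambda>U. R3 U (W U) (X U) (Y U)) \<le> ereal (C + 1) \<and>
      wnorm beta0 kappa 3 (\<lambda>U. dW R1 U (W U) (X U) (Y U)) \<le> ereal (C + 1) \<and>
      wnorm beta0 kappa (7/3) (\<lambda>U. dX R1 U (W U) (X U) (Y U)) \<le> ereal (C + 1) \<and>
      wnorm beta0 kappa (7/3) (\<lambda>U. dY R1 U (W U) (X U) (Y U)) \<le> ereal (C + 1) \<and>
      wnorm beta0 kappa (2/3) (\<lambda>U. dW R2 U (W U) (X U) (Y U)) \<le> ereal (C + 1) \<and>
      wnorm beta0 kappa 2 (\<lambda>U. dX R2 U (W U) (X U) (Y U)) \<le> ereal (C + 1) \<and>
      wnorm beta0 kappa 2 (\<lambda>U. dY R2 U (W U) (X U) (Y U)) \<le> ereal (C + 1) \<and>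
      wnorm beta0 kappa (2/3) (\<lambda>U. dW R3 U (W U) (X U) (Y U)) \<le> ereal (C + 1) \<and>
      wnorm beta0 kappa 2 (\<lambda>U. dX R3 U (W U) (X U) (Y U)) \<le> ereal (C + 1) \<and>
      wnorm beta0 kappa 2 (\<lambda>U. dY R3 U (W U) (X U) (Y U)) \<le> ereal (C + 1)"
      using g0 g1 g2 g3 g4 g5 g6 g7 g8 g9 g10 g11 by blast
  qed
qed

end
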